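(* Let $\delta\in(0,1)$, $c>2\sqrt{rd}$ and $h>0$, and define $\pi_{\delta,c,h}(\xi)=\pi_{\delta,c}(\xi)+h\xi$. Then $$-d\,\pi_{\delta,c,h}''-c\,\pi_{\delta,c,h}'\le r\,\pi_{\delta,c,h}\big(1-\delta-\pi_{\delta,c,h}\big)\quad\text{on }\Big[-\sqrt{\tfrac{c}{rh}},\sqrt{\tfrac{c}{rh}}\Big].$$ Furthermore, there exists $h^\star>0$ such that for all $h\in(0,h^\star]$, $$\max_{[-\sqrt{c/(rh)},0]}\pi_{\delta,c,h}\ge1-2\delta\quad\text{and}\quad\max_{[-\sqrt{c/(rh)},0]}\pi_{\delta,c,h}>\max\Big(\pi_{\delta,c,h}(0),\ \pi_{\delta,c,h}\big(-\sqrt{\tfrac{c}{rh}}\big)\Big).$$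
   Context: Fixed parameters $d>0$, $r>0$. For $\delta\in[0,1)$ and $c\ge2\sqrt{rd}$, $\pi_{\delta,c}$ denotes the unique decreasing traveling wave profile with speed $c$ of the scalar equation $\partial_tv-d\partial_{xx}v=rv(1-\delta-v)$, i.e. the solution of $-d\pi''-c\pi'=r\pi(1-\delta-\pi)$ on $\mathbb{R}$ with $\pi(-\infty)=1-\delta$, $\pi(+\infty)=0$, normalized by $\pi_{\delta,c}(0)=\frac{1-\delta}{2}$. *)

theory Defs
  imports "HOL-Analysis.Analysis"
begin

text \<open>A decreasing traveling wave profile with speed c of
  v_t - d v_xx = r v (1 - delta - v): a twice differentiable solution of
  -d p'' - c p' = r p (1 - delta - p) on the real line, with
  p(-inf) = 1 - delta, p(+inf) = 0, decreasing, normalized by p 0 = (1 - delta)/2.\<close>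

definition is_tw_profile :: "real \<Rightarrow> real \<Rightarrow> real \<Rightarrow> real \<Rightarrow> (real \<Rightarrow> real) \<Rightarrow> bool" where
  "is_tw_profile d r \<delta> c p \<longleftrightarrow>
     (\<forall>x. (p has_real_derivative deriv p x) (at x)) \<and>
     (\<forall>x. (deriv p has_real_derivative deriv (deriv p) x) (at x)) \<and>
     (\<forall>x. - d * deriv (deriv p) x - c * deriv p x = r * p x * (1 - \<delta> - p x)) \<and>
     (p \<longlongrightarrow> 1 - \<delta>) at_bot \<and>
     (p \<longlongrightarrow> 0) at_top \<and>
     (\<forall>x y. x < y \<longrightarrow> p y < p x) \<and>
     p 0 = (1 - \<delta>) / 2"

text \<open>pi_{delta,c}: the unique such profile (for delta in [0,1), c >= 2 sqrt(r d)).\<close>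
definition tw_profile :: "real \<Rightarrow> real \<Rightarrow> real \<Rightarrow> real \<Rightarrow> real \<Rightarrow> real" where
  "tw_profile d r \<delta> c = (THE p. is_tw_profile d r \<delta> c p)"

definition tw_profile_h :: "real \<Rightarrow> real \<Rightarrow> real \<Rightarrow> real \<Rightarrow> real \<Rightarrow> real \<Rightarrow> real" where
  "tw_profile_h d r \<delta> c h = (\<lambda>\<xi>. tw_profile d r \<delta> c \<xi> + h * \<xi>)"

end

theory Submission
  imports Defs "HOL-Analysis.Lipschitz"
begin

locale prof =
  fixes d r \<delta> c :: real and p :: "real \<Rightarrow> real"
  assumes d: "d > 0" and r: "r > 0" and \<delta>1: "\<delta> < 1" and P: "is_tw_profile d r \<delta> c p"
begin

lemma D1: "(p has_real_derivative deriv p x) (at x)"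
  using P unfolding is_tw_profile_def by blast
lemma D2: "(deriv p has_real_derivative deriv (deriv p) x) (at x)"
  using P unfolding is_tw_profile_def by blast
lemma ode: "- d * deriv (deriv p) x - c * deriv p x = r * p x * (1 - \<delta> - p x)"
  using P unfolding is_tw_profile_def by blast
lemma lbot: "(p \<longlongrightarrow> 1 - \<delta>) at_bot"
  using P unfolding is_tw_profile_def by blast
lemma ltop: "(p \<longlongrightarrow> 0) at_top"
  using P unfolding is_tw_profile_def by blast
lemma dec: "x < y \<Longrightarrow> p y < p x"
  using P unfolding is_tw_profile_def by blast
lemma p0: "p 0 = (1 - \<delta>) / 2"
  using P unfolding is_tw_profile_def by blast
lemma cont: "isCont p x"
  using D1 DERIV_isCont by blast
lemma contd: "isCont (deriv p) x"
  using D2 DERIV_isCont by blast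

lemma ge0: "0 \<le> p x"
proof (rule tendsto_upperbound[OF ltop])
  show "\<forall>\<^sub>F i in at_top. p i \<le> p x"
    unfolding eventually_at_top_linorder
    by (rule exI[of _ x]) (metis dec le_less order.refl)
qed simp

lemma le1: "p x \<le> 1 - \<delta>"
proof (rule tendsto_lowerbound[OF lbot])
  show "\<forall>\<^sub>F i in at_bot. p x \<le> p i"
    unfolding eventually_at_bot_linorder
    by (rule exI[of _ x]) (metis dec le_less order.refl)
qed simp

lemma pos: "0 < p x"
  using ge0[of "x+1"] dec[of x "x+1"] by simp

lemma lt1: "p x < 1 - \<delta>"
  using le1[of "x-1"] dec[of "x-1" x] by simp

lemma dle: "deriv p x \<le> 0"
proof (rule ccontr)
  assume "\<not> deriv p x \<le> 0"
  then obtain e where "e > 0" and e: "\<forall>h>0. h < e \<longrightarrow> p x < p (x + h)"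
    using DERIV_pos_inc_right[OF D1, of x] by auto
  have "p x < p (x + e/2)" using e \<open>e > 0\<close> by simp
  then show False using dec[of x "x + e/2"] \<open>e > 0\<close> by simp
qed

lemma dneg: "deriv p x < 0"
proof (rule ccontr)
  assume "\<not> deriv p x < 0"
  then have z: "deriv p x = 0" using dle[of x] by simp
  have "r * p x * (1 - \<delta> - p x) > 0"
    using pos[of x] lt1[of x] r by simp
  then have "d * deriv (deriv p) x < 0" using ode[of x] z by simp
  then have "deriv (deriv p) x < 0" using d by (simp add: mult_less_0_iff)
  then obtain e where "e > 0" and e: "\<forall>h>0. h < e \<longrightarrow> deriv p x < deriv p (x - h)"
    using DERIV_neg_dec_left[OF D2, of x] by auto
  have "deriv p x < deriv p (x - e/2)" using e \<open>e > 0\<close> by simp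
  then show False using dle[of "x - e/2"] z by simp
qed

lemma range: assumes "0 < y" "y < 1 - \<delta>" shows "\<exists>x. p x = y"
proof -
  have "\<forall>\<^sub>F x in at_bot. p x > y" using lbot assms(2) by (rule order_tendstoD)
  then obtain x1 where x1: "p x1 > y" unfolding eventually_at_bot_linorder by auto
  have "\<forall>\<^sub>F x in at_top. p x < y" using ltop assms(1) by (rule order_tendstoD)
  then obtain x2 where x2: "x2 \<ge> x1" "p x2 < y" unfolding eventually_at_top_linorder
    by (metis nle_le)
  show ?thesis using IVT2[of p x2 y x1] x1 x2 cont by force
qed

lemma small_deriv: assumes "e > 0" shows "\<exists>x\<le>x0. \<bar>deriv p x\<bar> < e"
proof -
  have "\<forall>\<^sub>F x in at_bot. p x > 1 - \<delta> - e" using lbot assms by (intro order_tendstoD) auto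
  then obtain X where X: "\<And>x. x \<le> X \<Longrightarrow> p x > 1 - \<delta> - e" unfolding eventually_at_bot_linorder by auto
  define x1 where "x1 = min X x0 - 1"
  obtain z where z: "x1 < z" "z < x1 + 1" "p (x1+1) - p x1 = (x1 + 1 - x1) * deriv p z"
    using MVT2[of x1 "x1+1" p "deriv p"] D1 by auto
  have "p (x1 + 1) > 1 - \<delta> - e" using X[of "x1+1"] unfolding x1_def by auto
  moreover have "p x1 < 1 - \<delta>" by (rule lt1)
  moreover have "deriv p z < 0" by (rule dneg)
  ultimately have "\<bar>deriv p z\<bar> < e" using z by auto
  moreover have "z \<le> x0" using z unfolding x1_def by auto
  ultimately show ?thesis by blast
qed

end

lemma propag:
  fixes E E' :: "real \<Rightarrow> real"
  assumes der: "\<And>x. (E has_real_derivative E' x) (at x)"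
    and neg: "\<And>x. E x > 0 \<Longrightarrow> E' x \<le> 0"
    and pos: "E x0 > 0" and le: "x \<le> x0"
  shows "E x \<ge> E x0"
proof (rule ccontr)
  assume "\<not> E x \<ge> E x0"
  then have lt: "E x < E x0" by simp
  define v where "v = (max (E x) 0 + E x0) / 2"
  have v: "E x < v" "v < E x0" "v > 0" using lt pos unfolding v_def by auto
  define S where "S = {y. x \<le> y \<and> y \<le> x0 \<and> E y \<le> v}"
  have contE: "continuous_on UNIV E"
    using der by (meson DERIV_isCont continuous_at_imp_continuous_on)
  have "closed {y. E y \<le> v}"
    by (rule closed_Collect_le[OF contE]) simp
  then have "closed ({x..x0} \<inter> {y. E y \<le> v})" by (intro closed_Int) auto
  moreover have "S = {x..x0} \<inter> {y. E y \<le> v}" unfolding S_def by auto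
  ultimately have clS: "closed S" by simp
  have "x \<in> S" using le v unfolding S_def by auto
  moreover have bS: "bdd_above S" unfolding S_def by (rule bdd_aboveI[of _ x0]) auto
  ultimately have sS: "Sup S \<in> S" using clS closed_contains_Sup by blast
  define s where "s = Sup S"
  have s: "E s \<le> v" "s \<le> x0" "x \<le> s" using sS unfolding s_def S_def by auto
  have "s \<noteq> x0" using s v by auto
  then have sx0: "s < x0" using s by simp
  have above: "E y > v" if "s < y" "y \<le> x0" for y
  proof (rule ccontr)
    assume "\<not> E y > v"
    then have "y \<in> S" using that s unfolding S_def by auto
    then have "y \<le> s" unfolding s_def using bS by (rule cSup_upper)
    then show False using that by simp
  qed
  obtain z where z: "s < z" "z < x0" "E x0 - E s = (x0 - s) * E' z"
    using MVT2[OF sx0, of E E'] der by blast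
  have "E z > 0" using above[of z] z v by simp
  then have "E' z \<le> 0" by (rule neg)
  then have "E x0 - E s \<le> 0" using z sx0 by (simp add: mult_nonneg_nonpos)
  then show False using s v by simp
qed

context
  fixes d r \<delta> c :: real and p q :: "real \<Rightarrow> real"
  assumes Pp: "prof d r \<delta> c p" and Pq: "prof d r \<delta> c q" and cpos: "c > 0"
begin

interpretation P: prof d r \<delta> c p by (rule Pp)
interpretation Q: prof d r \<delta> c q by (rule Pq)

lemma inj_q: "q x = q y \<Longrightarrow> x = y"
  by (metis Q.dec less_irrefl linorder_cases)

lemma tau_ex: "\<exists>\<tau>. (\<forall>x. q (\<tau> x) = p x) \<and> (\<forall>x. (\<tau> has_real_derivative deriv p x / deriv q (\<tau> x)) (at x))"
proof -
  define \<sigma> where "\<sigma> y = (THE x. q x = y)" for y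
  have s1: "q (\<sigma> y) = y" if yy: "0 < y" "y < 1 - \<delta>" for y
  proof -
    obtain x where "q x = y" using Q.range yy by blast
    then have "\<exists>!x. q x = y" using inj_q by blast
    then show ?thesis unfolding \<sigma>_def by (rule theI')
  qed
  have s2: "\<sigma> (q x) = x" for x
    unfolding \<sigma>_def by (rule the_equality) (auto intro: inj_q)
  have sder: "(\<sigma> has_real_derivative inverse (deriv q (\<sigma> y))) (at y)" if "0 < y" "y < 1 - \<delta>" for y
  proof (rule DERIV_inverse_function[where f = q and a = 0 and b = "1 - \<delta>"])
    show "(q has_real_derivative deriv q (\<sigma> y)) (at (\<sigma> y))" by (rule Q.D1)
    show "deriv q (\<sigma> y) \<noteq> 0" using Q.dneg by (metis less_irrefl)
    show "0 < y" "y < 1 - \<delta>" by fact+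
    show "q (\<sigma> z) = z" if "0 < z" "z < 1 - \<delta>" for z using s1 that by blast
    have "isCont \<sigma> (q (\<sigma> y))"
      by (rule isCont_inverse_function[where d = 1]) (auto simp: s2 Q.cont)
    then show "isCont \<sigma> y" using s1[OF that] by simp
  qed
  define \<tau> where "\<tau> x = \<sigma> (p x)" for x
  have t1: "q (\<tau> x) = p x" for x unfolding \<tau>_def using s1 P.pos P.lt1 by blast
  have t2: "(\<tau> has_real_derivative deriv p x / deriv q (\<tau> x)) (at x)" for x
  proof -
    have "((\<lambda>x. \<sigma> (p x)) has_real_derivative inverse (deriv q (\<sigma> (p x))) * deriv p x) (at x)"
      by (rule DERIV_chain2[OF sder P.D1]) (auto intro: P.pos P.lt1)
    then show ?thesis unfolding \<tau>_def by (simp add: field_simps)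
  qed
  show ?thesis using t1 t2 by blast
qed

lemma U:
  assumes t1: "\<And>x. q (\<tau> x) = p x"
    and t2: "\<And>x. (\<tau> has_real_derivative deriv p x / deriv q (\<tau> x)) (at x)"
  shows "(deriv p x0)\<^sup>2 \<le> (deriv q (\<tau> x0))\<^sup>2"
proof (rule ccontr)
  define A where "A x = deriv p x" for x
  define B where "B x = deriv q (\<tau> x)" for x
  define E where "E x = (A x)\<^sup>2 - (B x)\<^sup>2" for x
  define E' where "E' x = - 2 * c * A x * (A x - B x) / d" for x
  assume "\<not> ?thesis"
  then have E0: "E x0 > 0" unfolding E_def A_def B_def by simp
  have Aneg: "A x < 0" for x unfolding A_def by (rule P.dneg)
  have Bneg: "B x < 0" for x unfolding B_def by (rule Q.dneg)
  have der: "(E has_real_derivative E' x) (at x)" for x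
  proof -
    have dA: "(A has_real_derivative deriv (deriv p) x) (at x)" unfolding A_def by (rule P.D2)
    have dB: "(B has_real_derivative deriv (deriv q) (\<tau> x) * (deriv p x / deriv q (\<tau> x))) (at x)"
      unfolding B_def by (rule DERIV_chain2[OF Q.D2 t2])
    have "(E has_real_derivative 2 * A x * deriv (deriv p) x - 2 * B x * (deriv (deriv q) (\<tau> x) * (deriv p x / deriv q (\<tau> x)))) (at x)"
      unfolding E_def by (auto intro!: derivative_eq_intros dA dB)
    moreover have "2 * A x * deriv (deriv p) x - 2 * B x * (deriv (deriv q) (\<tau> x) * (deriv p x / deriv q (\<tau> x))) = E' x"
    proof -
      have Bnz: "B x \<noteq> 0" using Bneg[of x] by simp
      have o1: "- d * deriv (deriv p) x - c * A x = r * p x * (1 - \<delta> - p x)" unfolding A_def by (rule P.ode)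
      have o2: "- d * deriv (deriv q) (\<tau> x) - c * B x = r * p x * (1 - \<delta> - p x)"
        unfolding B_def using Q.ode[of "\<tau> x"] t1[of x] by simp
      have e1: "2 * B x * (deriv (deriv q) (\<tau> x) * (deriv p x / deriv q (\<tau> x))) = 2 * A x * deriv (deriv q) (\<tau> x)"
        using Bnz unfolding A_def B_def by (simp add: field_simps)
      have "d * (deriv (deriv p) x - deriv (deriv q) (\<tau> x)) = - c * (A x - B x)"
        using o1 o2 by (simp add: algebra_simps)
      then have "deriv (deriv p) x - deriv (deriv q) (\<tau> x) = - c * (A x - B x) / d"
        using P.d by (simp add: field_simps)
      then show ?thesis using e1 unfolding E'_def by (simp add: algebra_simps)
    qed
    ultimately show ?thesis by simp
  qed
  have neg: "E' x \<le> 0" if "E x > 0" for x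
  proof -
    have "(B x)\<^sup>2 < (A x)\<^sup>2" using that unfolding E_def by simp
    then have "\<bar>B x\<bar> < \<bar>A x\<bar>" using abs_le_square_iff not_le by blast
    then have "A x < B x" using Aneg[of x] Bneg[of x] by simp
    then have "A x * (A x - B x) > 0" using Aneg[of x] by (simp add: mult_neg_neg)
    then show ?thesis unfolding E'_def using cpos P.d
      by (simp add: divide_nonpos_pos)
  qed
  have big: "E x \<ge> E x0" if "x \<le> x0" for x
    by (rule propag[OF der neg E0 that])
  obtain x where x: "x \<le> x0" "\<bar>A x\<bar> < sqrt (E x0)"
    using P.small_deriv[of "sqrt (E x0)" x0] E0 unfolding A_def by auto
  have "(A x)\<^sup>2 < E x0"
    using x(2) E0 by (metis abs_ge_zero power2_abs real_sqrt_abs real_sqrt_less_iff real_sqrt_pow2_iff sqrt_le_D less_imp_le not_le)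
  moreover have "E x \<le> (A x)\<^sup>2" unfolding E_def by simp
  ultimately show False using big[OF x(1)] by simp
qed

end

lemma tw_unique:
  assumes "d > 0" "r > 0" "\<delta> < 1" "c > 0"
    and "is_tw_profile d r \<delta> c p" "is_tw_profile d r \<delta> c q"
  shows "p = q"
proof -
  have Pp: "prof d r \<delta> c p" and Pq: "prof d r \<delta> c q" using assms by (simp_all add: prof_def)
  interpret P: prof d r \<delta> c p by (rule Pp)
  interpret Q: prof d r \<delta> c q by (rule Pq)
  obtain \<tau> where t1: "\<And>x. q (\<tau> x) = p x" and t2: "\<And>x. (\<tau> has_real_derivative deriv p x / deriv q (\<tau> x)) (at x)"
    using tau_ex[OF Pp Pq assms(4)] by blast
  obtain \<rho> where r1: "\<And>x. p (\<rho> x) = q x" and r2: "\<And>x. (\<rho> has_real_derivative deriv q x / deriv p (\<rho> x)) (at x)"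
    using tau_ex[OF Pq Pp assms(4)] by blast
  have rt: "\<rho> (\<tau> x) = x" for x
    using r1[of "\<tau> x"] t1[of x] inj_q[OF Pq Pp assms(4)] by metis
  have eqd: "deriv p x = deriv q (\<tau> x)" for x
  proof -
    have "(deriv p x)\<^sup>2 \<le> (deriv q (\<tau> x))\<^sup>2" by (rule U[OF Pp Pq assms(4) t1 t2])
    moreover have "(deriv q (\<tau> x))\<^sup>2 \<le> (deriv p (\<rho> (\<tau> x)))\<^sup>2" by (rule U[OF Pq Pp assms(4) r1 r2])
    ultimately have "(deriv p x)\<^sup>2 = (deriv q (\<tau> x))\<^sup>2" using rt by simp
    then have "\<bar>deriv p x\<bar> = \<bar>deriv q (\<tau> x)\<bar>" using power2_eq_iff by fastforce
    then show ?thesis using P.dneg[of x] Q.dneg[of "\<tau> x"] by simp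
  qed
  have "((\<lambda>x. \<tau> x - x) has_real_derivative 0) (at x)" for x
  proof -
    have "((\<lambda>x. \<tau> x - x) has_real_derivative deriv p x / deriv q (\<tau> x) - 1) (at x)"
      by (auto intro!: derivative_eq_intros t2)
    moreover have "deriv p x / deriv q (\<tau> x) = 1" using eqd[of x] Q.dneg[of "\<tau> x"] by simp
    ultimately show ?thesis by simp
  qed
  then have "\<tau> x - x = \<tau> 0 - 0" for x using DERIV_isconst_all by blast
  moreover have "\<tau> 0 = 0" using t1[of 0] P.p0 Q.p0 inj_q[OF Pp Pq assms(4)] by metis
  ultimately have "\<tau> x = x" for x by simp
  then show ?thesis using t1 by auto
qed

context prof begin

lemma tail:
  assumes cpos: "c > 0" and e: "e > 0"
  shows "\<exists>T>0. \<forall>t\<ge>T. t * (1 - \<delta> - p (- t)) < e"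
proof -
  define a where "a = 1 - \<delta>"
  have a: "a > 0" using \<delta>1 unfolding a_def by simp
  define \<Phi> where "\<Phi> x = - d * deriv p x - c * p x" for x
  define f where "f x = r * p x * (1 - \<delta> - p x)" for x
  have dPhi: "(\<Phi> has_real_derivative f x) (at x)" for x
  proof -
    have "(\<Phi> has_real_derivative - d * deriv (deriv p) x - c * deriv p x) (at x)"
      unfolding \<Phi>_def by (auto intro!: derivative_eq_intros D1 D2)
    then show ?thesis using ode[of x] unfolding f_def by simp
  qed
  have fpos: "f x \<ge> 0" for x unfolding f_def using pos[of x] lt1[of x] r by simp
  have mono: "\<Phi> y \<le> \<Phi> x" if "y \<le> x" for x y
  proof (cases "y = x")
    case False
    then have "y < x" using that by simp
    then obtain z where "y < z" "z < x" "\<Phi> x - \<Phi> y = (x - y) * f z"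
      using MVT2[of y x \<Phi> f] dPhi by blast
    moreover have "(x - y) * f z \<ge> 0" using fpos[of z] \<open>y < x\<close> by simp
    ultimately show ?thesis by linarith
  qed simp
  have lowb: "\<Phi> x \<ge> - c * a" for x
  proof -
    have "- d * deriv p x \<ge> 0" using dle[of x] d by (simp add: mult_nonneg_nonpos)
    moreover have "c * p x \<le> c * a" using le1[of x] cpos unfolding a_def by simp
    ultimately show ?thesis unfolding \<Phi>_def by simp
  qed
  define m where "m = Inf (\<Phi> ` {..0})"
  have bb: "bdd_below (\<Phi> ` {..0})" using lowb by (intro bdd_belowI[of _ "- c * a"]) auto
  define e' where "e' = e * r * a / 8"
  have e': "e' > 0" unfolding e'_def using e r a by simp
  obtain x0 where x0: "x0 \<le> 0" "\<Phi> x0 < m + e'"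
  proof -
    have "\<exists>y\<in>\<Phi> ` {..0}. y < m + e'" unfolding m_def
      by (rule cInf_lessD) (use e' in auto)
    then show ?thesis using that by auto
  qed
  define T where "T = max 2 (- 2 * x0)"
  have T: "T > 0" unfolding T_def by simp
  have "t * (a - p (- t)) < e" if t: "t \<ge> T" for t
  proof -
    define s where "s = t / 2"
    have s: "s \<ge> 1" "- s \<le> x0" using t unfolding s_def T_def by auto
    have "m \<le> \<Phi> (- 2 * s)" unfolding m_def using bb s by (intro cInf_lower) auto
    moreover have "\<Phi> (- s) \<le> \<Phi> x0" using mono s by simp
    ultimately have diff: "\<Phi> (- s) - \<Phi> (- 2 * s) < e'" using x0 by simp
    obtain z where z: "- 2 * s < z" "z < - s" "\<Phi> (- s) - \<Phi> (- 2 * s) = (- s - - 2 * s) * f z"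
      using MVT2[of "- 2 * s" "- s" \<Phi> f] dPhi s by auto
    have pz1: "p z \<ge> a / 2" using p0 dec[of z 0] z s unfolding a_def by simp
    have pz2: "a - p z \<ge> a - p (- 2 * s)" using dec[of "- 2 * s" z] z by simp
    have pz3: "a - p (- 2 * s) \<ge> 0" using lt1 unfolding a_def by (simp add: less_imp_le)
    have "f z \<ge> r * (a / 2) * (a - p (- 2 * s))"
    proof -
      have "r * (a / 2) * (a - p (- 2 * s)) \<le> r * p z * (a - p (- 2 * s))"
        using pz1 pz3 r by (intro mult_right_mono mult_left_mono) auto
      also have "\<dots> \<le> r * p z * (a - p z)"
        using pz2 r pos[of z] by (intro mult_left_mono) auto
      finally show ?thesis unfolding f_def a_def by simp
    qed
    then have "s * (r * (a / 2) * (a - p (- 2 * s))) \<le> s * f z" using s by (intro mult_left_mono) auto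
    also have "\<dots> < e'" using diff z by simp
    finally have "s * (r * (a / 2) * (a - p (- 2 * s))) < e'" .
    then have "(2 * s) * (a - p (- 2 * s)) * (r * a / 4) < e'" by (simp add: algebra_simps)
    then have "(2 * s) * (a - p (- 2 * s)) < e' / (r * a / 4)" using r a by (simp add: field_simps)
    also have "e' / (r * a / 4) = e / 2" unfolding e'_def using r a by (simp add: field_simps)
    finally show ?thesis using e unfolding s_def by simp
  qed
  then show ?thesis using T unfolding a_def by blast
qed

end

definition Rop :: "real \<Rightarrow> (real \<Rightarrow> real) \<Rightarrow> real \<Rightarrow> real" where
  "Rop \<beta> \<phi> x = integral {x..} (\<lambda>y. exp (- \<beta> * y) * \<phi> y)"

lemma atLeast_lebesgue[simp]: "{x::real..} \<in> sets lebesgue"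
  using lebesgue_closedin[of UNIV "{x..}"] by simp

lemma exp_int:
  fixes \<kappa> \<beta> x :: real
  assumes "\<kappa> < \<beta>"
  shows "((\<lambda>y. exp (- \<beta> * y) * exp (\<kappa> * y)) has_integral exp ((\<kappa> - \<beta>) * x) / (\<beta> - \<kappa>)) {x..}"
proof -
  have e: "(\<lambda>y. exp (- \<beta> * y) * exp (\<kappa> * y)) = (\<lambda>y. exp (- (\<beta> - \<kappa>) * y))"
  proof
    fix y
    have "exp (- \<beta> * y) * exp (\<kappa> * y) = exp (- \<beta> * y + \<kappa> * y)" by (rule exp_add[symmetric])
    also have "\<dots> = exp (- (\<beta> - \<kappa>) * y)" by (simp add: algebra_simps)
    finally show "exp (- \<beta> * y) * exp (\<kappa> * y) = exp (- (\<beta> - \<kappa>) * y)" .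
  qed
  show ?thesis unfolding e using has_integral_exp_minus_to_infinity[of "\<beta> - \<kappa>" x] assms
    by (simp add: algebra_simps)
qed

lemma Iint:
  fixes \<phi> :: "real \<Rightarrow> real" and x \<kappa> \<beta> C :: real
  assumes c: "continuous_on UNIV \<phi>" and k: "\<kappa> < \<beta>"
    and b: "\<And>y. y \<ge> x \<Longrightarrow> \<bar>\<phi> y\<bar> \<le> C * exp (\<kappa> * y)"
  shows "(\<lambda>y. exp (- \<beta> * y) * \<phi> y) integrable_on {x..}"
proof (rule measurable_bounded_by_integrable_imp_integrable_real[where g = "\<lambda>y. C * (exp (- \<beta> * y) * exp (\<kappa> * y))"])
  show "(\<lambda>y. exp (- \<beta> * y) * \<phi> y) \<in> borel_measurable (lebesgue_on {x..})"
    by (rule continuous_imp_measurable_on_sets_lebesgue)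
       (auto intro!: continuous_intros continuous_on_subset[OF c])
  show "(\<lambda>y. C * (exp (- \<beta> * y) * exp (\<kappa> * y))) integrable_on {x..}"
    using has_integral_mult_right[OF exp_int[OF k, of x], of C] by (auto simp: integrable_on_def)
  show "\<bar>exp (- \<beta> * y) * \<phi> y\<bar> \<le> C * (exp (- \<beta> * y) * exp (\<kappa> * y))" if "y \<in> {x..}" for y
    using b[of y] that by (simp add: abs_mult mult.left_commute)
qed auto

lemma Rop_exp: "\<kappa> < \<beta> \<Longrightarrow> Rop \<beta> (\<lambda>y. exp (\<kappa> * y)) x = exp ((\<kappa> - \<beta>) * x) / (\<beta> - \<kappa>)"
  unfolding Rop_def using exp_int by (rule integral_unique)

lemma Rop_add:
  assumes "(\<lambda>y. exp (- \<beta> * y) * \<phi> y) integrable_on {x..}" "(\<lambda>y. exp (- \<beta> * y) * \<psi> y) integrable_on {x..}"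
  shows "Rop \<beta> (\<lambda>y. \<phi> y + \<psi> y) x = Rop \<beta> \<phi> x + Rop \<beta> \<psi> x"
  unfolding Rop_def using integral_add[OF assms] by (simp add: distrib_left)

lemma Rop_diff:
  assumes "(\<lambda>y. exp (- \<beta> * y) * \<phi> y) integrable_on {x..}" "(\<lambda>y. exp (- \<beta> * y) * \<psi> y) integrable_on {x..}"
  shows "Rop \<beta> (\<lambda>y. \<phi> y - \<psi> y) x = Rop \<beta> \<phi> x - Rop \<beta> \<psi> x"
  unfolding Rop_def using integral_diff[OF assms] by (simp add: right_diff_distrib)

lemma Rop_cmul: "Rop \<beta> (\<lambda>y. k * \<phi> y) x = k * Rop \<beta> \<phi> x"
  unfolding Rop_def by (simp add: mult.left_commute)

lemma Rop_mono:
  assumes "(\<lambda>y. exp (- \<beta> * y) * \<phi> y) integrable_on {x..}" "(\<lambda>y. exp (- \<beta> * y) * \<psi> y) integrable_on {x..}"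
    and "\<And>y. y \<ge> x \<Longrightarrow> \<phi> y \<le> \<psi> y"
  shows "Rop \<beta> \<phi> x \<le> Rop \<beta> \<psi> x"
  unfolding Rop_def using assms by (intro integral_le) auto

lemma Rop_nonneg:
  assumes "(\<lambda>y. exp (- \<beta> * y) * \<phi> y) integrable_on {x..}" "\<And>y. y \<ge> x \<Longrightarrow> 0 \<le> \<phi> y"
  shows "0 \<le> Rop \<beta> \<phi> x"
  unfolding Rop_def by (rule integral_nonneg) (use assms in auto)

lemma Rop_deriv:
  assumes c: "continuous_on UNIV \<phi>" and I: "\<And>x. (\<lambda>y. exp (- \<beta> * y) * \<phi> y) integrable_on {x..}"
  shows "(Rop \<beta> \<phi> has_real_derivative - (exp (- \<beta> * x) * \<phi> x)) (at x)"
proof -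
  define g where "g y = exp (- \<beta> * y) * \<phi> y" for y
  have cg: "continuous_on UNIV g" unfolding g_def by (intro continuous_intros c)
  define b where "b = x + 1"
  define a0 where "a0 = x - 1"
  have split: "Rop \<beta> \<phi> y = integral {y..b} g + integral {b..} g" if "y \<le> b" for y
  proof -
    have i1: "g integrable_on {y..b}"
      using integrable_continuous_interval continuous_on_subset[OF cg] by blast
    have i2: "g integrable_on {b..}" using I unfolding g_def by blast
    have "{y..} = {y..b} \<union> {b..}" using that by auto
    moreover have "negligible ({y..b} \<inter> {b..})"
    proof -
      have "{y..b} \<inter> {b..} \<subseteq> {b}" by auto
      then show ?thesis using negligible_subset negligible_sing by blast
    qed
    ultimately show ?thesis unfolding Rop_def g_def[symmetric] using integral_Un[OF i1 i2] by simp
  qed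
  have d1: "((\<lambda>y. integral {y..b} g) has_real_derivative - g x) (at x within {a0..b})"
    by (rule integral_has_real_derivative') (auto intro: continuous_on_subset[OF cg] simp: a0_def b_def)
  have "at x within {a0..b} = at x" by (rule at_within_Icc_at) (auto simp: a0_def b_def)
  then have d2: "((\<lambda>y. integral {y..b} g + integral {b..} g) has_real_derivative - g x) (at x)"
    using d1 by (auto intro!: derivative_eq_intros)
  have gx: "- g x = - (exp (- \<beta> * x) * \<phi> x)" by (simp add: g_def)
  show ?thesis
  proof (rule has_field_derivative_transform_within_open[OF d2[unfolded gx], of "{..<b}"])
    show "open {..<b}" by simp
    show "x \<in> {..<b}" by (simp add: b_def)
    show "integral {y..b} g + integral {b..} g = Rop \<beta> \<phi> y" if "y \<in> {..<b}" for y
      using split[of y] that by simp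
  qed
qed

lemma Rop_bound:
  assumes c: "continuous_on UNIV \<phi>" and B: "\<And>y. \<bar>\<phi> y\<bar> \<le> B" and \<beta>: "\<beta> > 0"
  shows "\<bar>Rop \<beta> \<phi> x\<bar> \<le> B * exp (- \<beta> * x) / \<beta>"
proof -
  have I: "(\<lambda>y. exp (- \<beta> * y) * \<phi> y) integrable_on {x..}"
    using Iint[OF c \<beta>, of x B] B by simp
  have E: "((\<lambda>y. exp (- \<beta> * y) * exp (0 * y)) has_integral exp ((0 - \<beta>) * x) / (\<beta> - 0)) {x..}"
    using exp_int[of 0 \<beta> x] \<beta> by simp
  have E2: "((\<lambda>y. B * exp (- \<beta> * y)) has_integral B * exp (- \<beta> * x) / \<beta>) {x..}"
    using has_integral_mult_right[OF E, of B] by simp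
  have "Rop \<beta> \<phi> x \<le> B * exp (- \<beta> * x) / \<beta>"
    unfolding Rop_def
  proof (rule has_integral_le[OF integrable_integral[OF I] E2])
    show "exp (- \<beta> * y) * \<phi> y \<le> B * exp (- \<beta> * y)" for y
      using B[of y] by (simp add: mult.commute mult_left_mono abs_le_iff)
  qed
  moreover have "- (B * exp (- \<beta> * x) / \<beta>) \<le> Rop \<beta> \<phi> x"
    unfolding Rop_def
  proof (rule has_integral_le[OF has_integral_neg[OF E2] integrable_integral[OF I]])
    show "- (B * exp (- \<beta> * y)) \<le> exp (- \<beta> * y) * \<phi> y" for y
    proof -
      have "- B \<le> \<phi> y" using B[of y] by (simp add: abs_le_iff)
      then have "- B * exp (- \<beta> * y) \<le> \<phi> y * exp (- \<beta> * y)" by (rule mult_right_mono) simp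
      then show ?thesis by (simp add: mult.commute)
    qed
  qed
  ultimately show ?thesis by simp
qed


lemma Rop_shift:
  assumes c: "continuous_on UNIV \<phi>" and B: "\<And>y. \<bar>\<phi> y\<bar> \<le> B" and \<beta>: "\<beta> > 0"
  shows "Rop \<beta> (\<lambda>y. \<phi> (y + s)) x = exp (\<beta> * s) * Rop \<beta> \<phi> (x + s)"
proof -
  have cs: "continuous_on UNIV (\<lambda>y. \<phi> (y + s))"
    by (rule continuous_on_compose2[OF c]) (auto intro!: continuous_intros)
  have Bs: "\<bar>\<phi> (y + s)\<bar> \<le> B" for y using B .
  have I: "(\<lambda>y. exp (- \<beta> * y) * \<phi> y) integrable_on {x..}" for x
    using Iint[OF c \<beta>, of x B] B by simp
  have Is: "(\<lambda>y. exp (- \<beta> * y) * \<phi> (y + s)) integrable_on {x..}" for x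
    using Iint[OF cs \<beta>, of x B] B by simp
  define D where "D x = Rop \<beta> (\<lambda>y. \<phi> (y + s)) x - exp (\<beta> * s) * Rop \<beta> \<phi> (x + s)" for x
  have "(D has_real_derivative 0) (at z)" for z
  proof -
    have d1: "(Rop \<beta> (\<lambda>y. \<phi> (y + s)) has_real_derivative - (exp (- \<beta> * z) * \<phi> (z + s))) (at z)"
      by (rule Rop_deriv[OF cs Is])
    have d2: "((\<lambda>x. Rop \<beta> \<phi> (x + s)) has_real_derivative - (exp (- \<beta> * (z + s)) * \<phi> (z + s)) * 1) (at z)"
      by (rule DERIV_chain2[OF Rop_deriv[OF c I]]) (auto intro!: derivative_eq_intros)
    have dD: "(D has_real_derivative - (exp (- \<beta> * z) * \<phi> (z + s)) - exp (\<beta> * s) * (- (exp (- \<beta> * (z + s)) * \<phi> (z + s)) * 1)) (at z)"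
      unfolding D_def by (rule DERIV_diff[OF d1 DERIV_cmult[OF d2]])
    have e: "exp (\<beta> * s) * exp (- \<beta> * (z + s)) = exp (- \<beta> * z)"
      by (simp add: exp_add[symmetric] algebra_simps)
    have "exp (\<beta> * s) * (- (exp (- \<beta> * (z + s)) * \<phi> (z + s)) * 1) = - (exp (\<beta> * s) * exp (- \<beta> * (z + s)) * \<phi> (z + s))"
      by (simp only: mult_1_right mult_minus_right mult.assoc)
    also have "\<dots> = - (exp (- \<beta> * z) * \<phi> (z + s))" by (simp only: e)
    finally have val: "- (exp (- \<beta> * z) * \<phi> (z + s)) - exp (\<beta> * s) * (- (exp (- \<beta> * (z + s)) * \<phi> (z + s)) * 1) = 0"
      by simp
    show ?thesis using dD by (simp only: val)
  qed
  then have const: "D z = D x" for z using DERIV_isconst_all by blast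
  have Bn: "B \<ge> 0" using B[of 0] by simp
  have bound: "\<bar>D z\<bar> \<le> 2 * B * exp (- \<beta> * z) / \<beta>" for z
  proof -
    have b1: "\<bar>Rop \<beta> (\<lambda>y. \<phi> (y + s)) z\<bar> \<le> B * exp (- \<beta> * z) / \<beta>" by (rule Rop_bound[OF cs Bs \<beta>])
    have b2: "\<bar>Rop \<beta> \<phi> (z + s)\<bar> \<le> B * exp (- \<beta> * (z + s)) / \<beta>" by (rule Rop_bound[OF c B \<beta>])
    have "\<bar>exp (\<beta> * s) * Rop \<beta> \<phi> (z + s)\<bar> \<le> exp (\<beta> * s) * (B * exp (- \<beta> * (z + s)) / \<beta>)"
      using mult_left_mono[OF b2, of "exp (\<beta> * s)"] by (simp add: abs_mult)
    also have "\<dots> = B * exp (- \<beta> * z) / \<beta>"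
      by (simp add: exp_add[symmetric] algebra_simps)
    finally show ?thesis using b1 unfolding D_def by simp
  qed
  show ?thesis
  proof (rule ccontr)
    assume "\<not> ?thesis"
    then have Dx: "\<bar>D x\<bar> > 0" unfolding D_def by simp
    define \<epsilon> where "\<epsilon> = \<bar>D x\<bar> * \<beta> / (2 * B + 1)"
    have \<epsilon>: "\<epsilon> > 0" unfolding \<epsilon>_def using Dx \<beta> Bn by simp
    define z where "z = - ln \<epsilon> / \<beta>"
    have "exp (- \<beta> * z) = \<epsilon>" unfolding z_def using \<beta> \<epsilon> by simp
    then have "\<bar>D z\<bar> \<le> 2 * B * \<epsilon> / \<beta>" using bound[of z] by simp
    also have "2 * B * \<epsilon> / \<beta> = \<bar>D x\<bar> * (2 * B / (2 * B + 1))"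
    proof -
      have "\<epsilon> / \<beta> = \<bar>D x\<bar> / (2 * B + 1)" unfolding \<epsilon>_def using \<beta> by simp
      then have "2 * B * \<epsilon> / \<beta> = 2 * B * (\<bar>D x\<bar> / (2 * B + 1))" by (metis times_divide_eq_right)
      then show ?thesis by simp
    qed
    also have "\<dots> < \<bar>D x\<bar>" using Dx Bn by (simp add: mult_less_cancel_left1 field_simps)
    finally show False using const[of z] by simp
  qed
qed

lemma Rop_lim:
  assumes B: "\<And>n y. \<bar>\<phi> n y\<bar> \<le> B" and \<beta>: "\<beta> > 0"
    and I: "\<And>n. (\<lambda>y. exp (- \<beta> * y) * \<phi> n y) integrable_on {x..}"
    and conv: "\<And>y. (\<lambda>n. \<phi> n y) \<longlonglongrightarrow> \<psi> y"
  shows "(\<lambda>n. Rop \<beta> (\<phi> n) x) \<longlonglongrightarrow> Rop \<beta> \<psi> x"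
proof -
  have E: "((\<lambda>y. exp (- \<beta> * y) * exp (0 * y)) has_integral exp ((0 - \<beta>) * x) / (\<beta> - 0)) {x..}"
    using exp_int[of 0 \<beta> x] \<beta> by simp
  have h: "(\<lambda>y. B * exp (- \<beta> * y)) integrable_on {x..}"
    using has_integral_mult_right[OF E, of B] by (auto simp: integrable_on_def)
  have "(\<lambda>n. integral {x..} (\<lambda>y. exp (- \<beta> * y) * \<phi> n y)) \<longlonglongrightarrow> integral {x..} (\<lambda>y. exp (- \<beta> * y) * \<psi> y)"
  proof (rule dominated_convergence(2)[OF I h])
    show "norm (exp (- \<beta> * y) * \<phi> n y) \<le> B * exp (- \<beta> * y)" for n y
      using B[of n y] by (simp add: abs_mult mult.commute)
    show "(\<lambda>n. exp (- \<beta> * y) * \<phi> n y) \<longlonglongrightarrow> exp (- \<beta> * y) * \<psi> y" for y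
      by (intro tendsto_mult tendsto_const conv)
  qed
  then show ?thesis unfolding Rop_def .
qed

lemma Rop_pos:
  assumes c: "continuous_on UNIV \<phi>" and I: "(\<lambda>y. exp (- \<beta> * y) * \<phi> y) integrable_on {x..}"
    and nn: "\<And>y. y \<ge> x \<Longrightarrow> 0 \<le> \<phi> y" and y0: "y0 \<ge> x" "\<phi> y0 > 0"
  shows "Rop \<beta> \<phi> x > 0"
proof -
  define g where "g y = exp (- \<beta> * y) * \<phi> y" for y
  have cg: "continuous_on UNIV g" unfolding g_def by (intro continuous_intros c)
  have g0: "g y0 > 0" unfolding g_def using y0 by simp
  have "isCont g y0" using cg by (simp add: continuous_on_eq_continuous_at)
  then have "g \<midarrow>y0\<rightarrow> g y0" by (simp add: isCont_def)
  then obtain \<eta> where \<eta>: "\<eta> > 0" "\<And>y. y \<noteq> y0 \<and> norm (y - y0) < \<eta> \<Longrightarrow> norm (g y - g y0) < g y0 / 2"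
    unfolding LIM_eq using g0 by (meson half_gt_zero)
  define b where "b = y0 + \<eta> / 2"
  have lowg: "g y \<ge> g y0 / 2" if "y \<in> {y0..b}" for y
  proof (cases "y = y0")
    case False
    then have "\<bar>g y - g y0\<bar> < g y0 / 2" using \<eta>(2)[of y] that \<eta>(1) unfolding b_def by auto
    moreover have "g y0 - g y \<le> \<bar>g y - g y0\<bar>" by simp
    ultimately show ?thesis by linarith
  qed (use g0 in simp)
  have ib: "g integrable_on {y0..b}"
    using integrable_continuous_interval continuous_on_subset[OF cg] by blast
  have "(g y0 / 2) * (b - y0) \<le> integral {y0..b} g"
  proof -
    have "((\<lambda>y. g y0 / 2) has_integral (g y0 / 2) * (b - y0)) {y0..b}"
      using has_integral_const_real[of "g y0 / 2" y0 b] \<eta> unfolding b_def by (simp add: mult.commute)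
    then show ?thesis using has_integral_le[OF _ integrable_integral[OF ib]] lowg by blast
  qed
  moreover have "(g y0 / 2) * (b - y0) > 0" using g0 \<eta> unfolding b_def by simp
  moreover have "integral {y0..b} g \<le> integral {x..} g"
  proof (rule integral_subset_le)
    show "{y0..b} \<subseteq> {x..}" using y0 by auto
    show "g integrable_on {y0..b}" by (rule ib)
    show "g integrable_on {x..}" using I unfolding g_def .
    show "\<forall>y\<in>{x..}. 0 \<le> g y" using nn unfolding g_def by simp
  qed
  ultimately show ?thesis unfolding Rop_def g_def[symmetric] by simp
qed

locale kpp =
  fixes d r a c :: real
  assumes d: "d > 0" and r: "r > 0" and a: "a > 0" and c: "c > 0" and disc: "c\<^sup>2 > 4 * d * r * a"
begin

definition "M = r * a"
definition "S = sqrt (c\<^sup>2 + 4 * d * M)"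
definition "b1 = (c + S) / (2 * d)"
definition "b2 = (S - c) / (2 * d)"

lemma M: "M > 0" unfolding M_def using r a by simp
lemma Sc: "S > c"
proof -
  have "c\<^sup>2 < c\<^sup>2 + 4 * d * M" using d M by simp
  then have "sqrt (c\<^sup>2) < S" unfolding S_def by (rule real_sqrt_less_mono)
  then show ?thesis using c by simp
qed
lemma S: "S > 0" using Sc c by simp
lemma S2: "S\<^sup>2 = c\<^sup>2 + 4 * d * M" unfolding S_def using d M by simp
lemma b1: "b1 > 0" unfolding b1_def using S c d by simp
lemma b2: "b2 > 0" unfolding b2_def using Sc d by simp
lemma b1b2: "d * (b1 + b2) = S" unfolding b1_def b2_def using d by (simp add: field_simps)
lemma b1mb2: "d * (b1 - b2) = c" unfolding b1_def b2_def using d by (simp add: field_simps)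
lemma b1tb2: "d * (b1 * b2) = M"
proof -
  have "d * (b1 * b2) = (S\<^sup>2 - c\<^sup>2) / (4 * d)" unfolding b1_def b2_def using d
    by (simp add: field_simps power2_eq_square)
  then show ?thesis using S2 d by simp
qed
lemma q1: "d * b1\<^sup>2 - c * b1 - M = 0"
proof -
  have "d * b1\<^sup>2 - c * b1 - M = b1 * (d * b1 - c) - M" by (simp add: algebra_simps power2_eq_square)
  also have "d * b1 - c = d * b2" using b1mb2 by (simp add: algebra_simps)
  finally show ?thesis using b1tb2 by (simp add: algebra_simps)
qed
lemma q2: "d * b2\<^sup>2 + c * b2 - M = 0"
proof -
  have "d * b2\<^sup>2 + c * b2 - M = b2 * (d * b2 + c) - M" by (simp add: algebra_simps power2_eq_square)
  also have "d * b2 + c = d * b1" using b1mb2 by (simp add: algebra_simps)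
  finally show ?thesis using b1tb2 by (simp add: algebra_simps)
qed
lemma b1c: "b1 > c / d"
proof -
  have "2 * c / (2 * d) < (c + S) / (2 * d)" by (rule divide_strict_right_mono) (use Sc d in auto)
  then show ?thesis unfolding b1_def using d by simp
qed

definition T :: "(real \<Rightarrow> real) \<Rightarrow> real \<Rightarrow> real" where
  "T \<phi> x = (exp (- b1 * x) * Rop b1 (\<lambda>z. \<phi> (- z)) (- x) + exp (b2 * x) * Rop b2 \<phi> x) / S"
definition T1 :: "(real \<Rightarrow> real) \<Rightarrow> real \<Rightarrow> real" where
  "T1 \<phi> x = (- b1 * exp (- b1 * x) * Rop b1 (\<lambda>z. \<phi> (- z)) (- x) + b2 * exp (b2 * x) * Rop b2 \<phi> x) / S"
definition T2 :: "(real \<Rightarrow> real) \<Rightarrow> real \<Rightarrow> real" where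
  "T2 \<phi> x = (b1\<^sup>2 * exp (- b1 * x) * Rop b1 (\<lambda>z. \<phi> (- z)) (- x) + b2\<^sup>2 * exp (b2 * x) * Rop b2 \<phi> x - (b1 + b2) * \<phi> x) / S"

definition TI :: "(real \<Rightarrow> real) \<Rightarrow> bool" where
  "TI \<phi> \<longleftrightarrow> (\<forall>x. (\<lambda>y. exp (- b1 * y) * \<phi> (- y)) integrable_on {x..}) \<and> (\<forall>x. (\<lambda>y. exp (- b2 * y) * \<phi> y) integrable_on {x..})"

definition Tadm :: "(real \<Rightarrow> real) \<Rightarrow> bool" where
  "Tadm \<phi> \<longleftrightarrow> continuous_on UNIV \<phi> \<and> (\<exists>B. \<forall>y. \<bar>\<phi> y\<bar> \<le> B)"

lemma cont_refl: fixes \<phi> :: "real \<Rightarrow> real" shows "continuous_on UNIV \<phi> \<Longrightarrow> continuous_on UNIV (\<lambda>z. \<phi> (- z))"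
  by (rule continuous_on_compose2[of UNIV \<phi>]) (auto intro!: continuous_on_minus[OF continuous_on_id])

lemma Tadm_TI: assumes "Tadm \<phi>" shows "TI \<phi>"
proof -
  obtain B where B: "\<And>y. \<bar>\<phi> y\<bar> \<le> B" and cc: "continuous_on UNIV \<phi>" using assms unfolding Tadm_def by blast
  have "(\<lambda>y. exp (- b1 * y) * \<phi> (- y)) integrable_on {x..}" for x
    using Iint[OF cont_refl[OF cc] b1, of x B] B by simp
  moreover have "(\<lambda>y. exp (- b2 * y) * \<phi> y) integrable_on {x..}" for x
    using Iint[OF cc b2, of x B] B by simp
  ultimately show ?thesis unfolding TI_def by blast
qed

lemma TI_exp: assumes "\<gamma> \<ge> 0" "\<gamma> < b1" shows "TI (\<lambda>y. exp (- \<gamma> * y))"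
proof -
  have "(\<lambda>y. exp (- b1 * y) * exp (\<gamma> * y)) integrable_on {x..}" for x
    using exp_int[OF assms(2), of x] by (auto simp: integrable_on_def)
  moreover have "(\<lambda>y. exp (- b2 * y) * exp (- \<gamma> * y)) integrable_on {x..}" for x
    using exp_int[of "- \<gamma>" b2 x] assms b2 by (auto simp: integrable_on_def)
  ultimately show ?thesis unfolding TI_def by simp
qed

lemma TI_add: "TI \<phi> \<Longrightarrow> TI \<psi> \<Longrightarrow> TI (\<lambda>y. \<phi> y + \<psi> y)"
  unfolding TI_def by (auto simp: distrib_left intro!: integrable_add)
lemma TI_diff: "TI \<phi> \<Longrightarrow> TI \<psi> \<Longrightarrow> TI (\<lambda>y. \<phi> y - \<psi> y)"
  unfolding TI_def by (auto simp: right_diff_distrib intro!: integrable_diff)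
lemma TI_cmul: assumes "TI \<phi>" shows "TI (\<lambda>y. k * \<phi> y)"
proof -
  have "(\<lambda>y. k *\<^sub>R (exp (- b1 * y) * \<phi> (- y))) integrable_on {x..}" for x
    using assms unfolding TI_def by (intro integrable_cmul) auto
  moreover have "(\<lambda>y. k *\<^sub>R (exp (- b2 * y) * \<phi> y)) integrable_on {x..}" for x
    using assms unfolding TI_def by (intro integrable_cmul) auto
  ultimately show ?thesis unfolding TI_def by (simp add: mult.left_commute[of _ k])
qed

lemma T_add: "TI \<phi> \<Longrightarrow> TI \<psi> \<Longrightarrow> T (\<lambda>y. \<phi> y + \<psi> y) x = T \<phi> x + T \<psi> x"
  unfolding T_def TI_def
  by (simp add: Rop_add[of b1 "\<lambda>z. \<phi> (- z)" "- x" "\<lambda>z. \<psi> (- z)", simplified] Rop_add add_divide_distrib algebra_simps)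
lemma T_diff: "TI \<phi> \<Longrightarrow> TI \<psi> \<Longrightarrow> T (\<lambda>y. \<phi> y - \<psi> y) x = T \<phi> x - T \<psi> x"
  unfolding T_def TI_def
  by (simp add: Rop_diff[of b1 "\<lambda>z. \<phi> (- z)" "- x" "\<lambda>z. \<psi> (- z)", simplified] Rop_diff diff_divide_distrib algebra_simps)
lemma T_cmul: "T (\<lambda>y. k * \<phi> y) x = k * T \<phi> x"
  unfolding T_def using Rop_cmul[of b1 k "\<lambda>z. \<phi> (- z)"] Rop_cmul[of b2 k \<phi>]
  by (simp add: algebra_simps)

lemma T_mono:
  assumes "TI \<phi>" "TI \<psi>" "\<And>y. \<phi> y \<le> \<psi> y"
  shows "T \<phi> x \<le> T \<psi> x"
proof -
  have "Rop b1 (\<lambda>z. \<phi> (- z)) (- x) \<le> Rop b1 (\<lambda>z. \<psi> (- z)) (- x)"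
    using assms unfolding TI_def by (intro Rop_mono) auto
  moreover have "Rop b2 \<phi> x \<le> Rop b2 \<psi> x"
    using assms unfolding TI_def by (intro Rop_mono) auto
  ultimately show ?thesis unfolding T_def using S
    by (intro divide_right_mono add_mono mult_left_mono) auto
qed

lemma T_exp:
  assumes "\<gamma> \<ge> 0" "\<gamma> < b1"
  shows "T (\<lambda>y. exp (- \<gamma> * y)) x = exp (- \<gamma> * x) / (M + c * \<gamma> - d * \<gamma>\<^sup>2)"
proof -
  have l: "Rop b1 (\<lambda>z. exp (- \<gamma> * - z)) (- x) = exp ((\<gamma> - b1) * (- x)) / (b1 - \<gamma>)"
    using Rop_exp[OF assms(2), of "- x"] by simp
  have rr: "Rop b2 (\<lambda>y. exp (- \<gamma> * y)) x = exp ((- \<gamma> - b2) * x) / (b2 - - \<gamma>)"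
    using Rop_exp[of "- \<gamma>" b2 x] assms b2 by simp
  have e1: "exp (- b1 * x) * exp ((\<gamma> - b1) * (- x)) = exp (- \<gamma> * x)"
    by (simp add: exp_add[symmetric] algebra_simps)
  have e2: "exp (b2 * x) * exp ((- \<gamma> - b2) * x) = exp (- \<gamma> * x)"
    by (simp add: exp_add[symmetric] algebra_simps)
  have g1: "b1 - \<gamma> > 0" using assms by simp
  have g2: "b2 + \<gamma> > 0" using assms b2 by simp
  have "T (\<lambda>y. exp (- \<gamma> * y)) x = (exp (- \<gamma> * x) / (b1 - \<gamma>) + exp (- \<gamma> * x) / (b2 + \<gamma>)) / S"
    unfolding T_def l rr using e1 e2 by (simp add: mult.assoc[symmetric])
  also have "\<dots> = exp (- \<gamma> * x) * ((b1 + b2) / ((b1 - \<gamma>) * (b2 + \<gamma>) * S))"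
    using g1 g2 S by (simp add: field_simps)
  also have "(b1 + b2) / ((b1 - \<gamma>) * (b2 + \<gamma>) * S) = 1 / (d * ((b1 - \<gamma>) * (b2 + \<gamma>)))"
  proof -
    have "(b1 + b2) / ((b1 - \<gamma>) * (b2 + \<gamma>) * S) = (b1 + b2) / (((b1 - \<gamma>) * (b2 + \<gamma>)) * (d * (b1 + b2)))"
      using b1b2 by simp
    also have "\<dots> = 1 / (d * ((b1 - \<gamma>) * (b2 + \<gamma>)))"
    proof -
      have gen: "\<And>X Y. X \<noteq> 0 \<Longrightarrow> Y \<noteq> 0 \<Longrightarrow> Y / (X * (d * Y)) = 1 / (d * X)"
        using d by (simp add: field_simps)
      show ?thesis by (rule gen) (use b1 b2 g1 g2 in auto)
    qed
    finally show ?thesis .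
  qed
  also have "d * ((b1 - \<gamma>) * (b2 + \<gamma>)) = M + c * \<gamma> - d * \<gamma>\<^sup>2"
  proof -
    have "d * ((b1 - \<gamma>) * (b2 + \<gamma>)) = d * (b1 * b2) + \<gamma> * (d * (b1 - b2)) - d * \<gamma>\<^sup>2"
      by (simp add: algebra_simps power2_eq_square)
    then show ?thesis using b1tb2 b1mb2 by simp
  qed
  finally show ?thesis by simp
qed

lemma T_const: "T (\<lambda>y. k) x = k / M"
proof -
  have "T (\<lambda>y. k * exp (- 0 * y)) x = k * T (\<lambda>y. exp (- 0 * y)) x" by (rule T_cmul)
  also have "T (\<lambda>y. exp (- 0 * y)) x = exp (- 0 * x) / (M + c * 0 - d * 0\<^sup>2)"
    by (rule T_exp) (use b1 in auto)
  finally show ?thesis by simp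
qed

end

context kpp begin

lemma Tadm_parts:
  assumes "Tadm \<phi>"
  obtains B where "\<And>y. \<bar>\<phi> y\<bar> \<le> B" "continuous_on UNIV \<phi>"
    "\<And>x. (\<lambda>y. exp (- b1 * y) * \<phi> (- y)) integrable_on {x..}"
    "\<And>x. (\<lambda>y. exp (- b2 * y) * \<phi> y) integrable_on {x..}"
  using assms Tadm_TI[OF assms] unfolding Tadm_def TI_def by blast

lemma dL:
  assumes "Tadm \<phi>"
  shows "((\<lambda>x. Rop b1 (\<lambda>z. \<phi> (- z)) (- x)) has_real_derivative exp (b1 * x) * \<phi> x) (at x)"
proof -
  obtain B where cc: "continuous_on UNIV \<phi>" and I1: "\<And>x. (\<lambda>y. exp (- b1 * y) * \<phi> (- y)) integrable_on {x..}"
    using Tadm_parts[OF assms] by metis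
  have "((\<lambda>x. Rop b1 (\<lambda>z. \<phi> (- z)) (- x)) has_real_derivative - (exp (- b1 * (- x)) * \<phi> (- (- x))) * (- 1)) (at x)"
    by (rule DERIV_chain2[OF Rop_deriv[OF cont_refl[OF cc] I1]]) (auto intro!: derivative_eq_intros)
  then show ?thesis by simp
qed

lemma dR:
  assumes "Tadm \<phi>"
  shows "(Rop b2 \<phi> has_real_derivative - (exp (- b2 * x) * \<phi> x)) (at x)"
proof -
  obtain B where cc: "continuous_on UNIV \<phi>" and I2: "\<And>x. (\<lambda>y. exp (- b2 * y) * \<phi> y) integrable_on {x..}"
    using Tadm_parts[OF assms] by metis
  show ?thesis by (rule Rop_deriv[OF cc I2])
qed

lemma ex1[simp]: "exp (x * b1) * exp (- (x * b1)) = 1" "exp (- (x * b1)) * exp (x * b1) = 1"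
  by (simp_all add: exp_add[symmetric])
lemma ex2[simp]: "exp (x * b2) * exp (- (x * b2)) = 1" "exp (- (x * b2)) * exp (x * b2) = 1"
  by (simp_all add: exp_add[symmetric])

lemma ee1: "exp (- b1 * x) * exp (b1 * x) = 1" by (simp add: exp_add[symmetric])
lemma ee2: "exp (b2 * x) * exp (- b2 * x) = 1" by (simp add: exp_add[symmetric])

lemma T_deriv:
  assumes "Tadm \<phi>"
  shows "(T \<phi> has_real_derivative T1 \<phi> x) (at x)"
proof -
  define L where "L x = Rop b1 (\<lambda>z. \<phi> (- z)) (- x)" for x
  have dl: "(L has_real_derivative exp (b1 * x) * \<phi> x) (at x)" unfolding L_def by (rule dL[OF assms])
  have dr: "(Rop b2 \<phi> has_real_derivative - (exp (- b2 * x) * \<phi> x)) (at x)" by (rule dR[OF assms])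
  have "((\<lambda>x. (exp (- b1 * x) * L x + exp (b2 * x) * Rop b2 \<phi> x) / S) has_real_derivative
     ((exp (- b1 * x) * (- b1)) * L x + (exp (b1 * x) * \<phi> x) * exp (- b1 * x)
      + ((exp (b2 * x) * b2) * Rop b2 \<phi> x + (- (exp (- b2 * x) * \<phi> x)) * exp (b2 * x))) / S) (at x)"
    by (intro DERIV_cdivide DERIV_add DERIV_mult dl dr) (auto intro!: derivative_eq_intros)
  moreover have "((exp (- b1 * x) * (- b1)) * L x + (exp (b1 * x) * \<phi> x) * exp (- b1 * x)
      + ((exp (b2 * x) * b2) * Rop b2 \<phi> x + (- (exp (- b2 * x) * \<phi> x)) * exp (b2 * x))) / S = T1 \<phi> x"
  proof -
    have "(exp (b1 * x) * \<phi> x) * exp (- b1 * x) = \<phi> x" by (simp add: exp_minus field_simps)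
    moreover have "(- (exp (- b2 * x) * \<phi> x)) * exp (b2 * x) = - \<phi> x" by (simp add: exp_minus field_simps)
    ultimately show ?thesis unfolding T1_def L_def by (simp add: algebra_simps)
  qed
  moreover have "T \<phi> = (\<lambda>x. (exp (- b1 * x) * L x + exp (b2 * x) * Rop b2 \<phi> x) / S)"
    unfolding T_def L_def by auto
  ultimately show ?thesis by simp
qed

lemma T1_deriv:
  assumes "Tadm \<phi>"
  shows "(T1 \<phi> has_real_derivative T2 \<phi> x) (at x)"
proof -
  define L where "L x = Rop b1 (\<lambda>z. \<phi> (- z)) (- x)" for x
  have dl: "(L has_real_derivative exp (b1 * x) * \<phi> x) (at x)" unfolding L_def by (rule dL[OF assms])
  have dr: "(Rop b2 \<phi> has_real_derivative - (exp (- b2 * x) * \<phi> x)) (at x)" by (rule dR[OF assms])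
  have "((\<lambda>x. (- b1 * exp (- b1 * x) * L x + b2 * exp (b2 * x) * Rop b2 \<phi> x) / S) has_real_derivative
     ((- b1 * (exp (- b1 * x) * (- b1))) * L x + (exp (b1 * x) * \<phi> x) * (- b1 * exp (- b1 * x))
      + ((b2 * (exp (b2 * x) * b2)) * Rop b2 \<phi> x + (- (exp (- b2 * x) * \<phi> x)) * (b2 * exp (b2 * x)))) / S) (at x)"
    by (intro DERIV_cdivide DERIV_add DERIV_mult DERIV_cmult dl dr) (auto intro!: derivative_eq_intros)
  moreover have "((- b1 * (exp (- b1 * x) * (- b1))) * L x + (exp (b1 * x) * \<phi> x) * (- b1 * exp (- b1 * x))
      + ((b2 * (exp (b2 * x) * b2)) * Rop b2 \<phi> x + (- (exp (- b2 * x) * \<phi> x)) * (b2 * exp (b2 * x)))) / S = T2 \<phi> x"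
  proof -
    have "(exp (b1 * x) * \<phi> x) * (- b1 * exp (- b1 * x)) = - b1 * \<phi> x" by (simp add: exp_minus field_simps)
    moreover have "(- (exp (- b2 * x) * \<phi> x)) * (b2 * exp (b2 * x)) = - b2 * \<phi> x" by (simp add: exp_minus field_simps)
    ultimately show ?thesis unfolding T2_def L_def by (simp add: algebra_simps power2_eq_square)
  qed
  moreover have "T1 \<phi> = (\<lambda>x. (- b1 * exp (- b1 * x) * L x + b2 * exp (b2 * x) * Rop b2 \<phi> x) / S)"
    unfolding T1_def L_def by auto
  ultimately show ?thesis by simp
qed

lemma T_ode: "- d * T2 \<phi> x - c * T1 \<phi> x + M * T \<phi> x = \<phi> x"
proof -
  have gen: "- d * ((b1\<^sup>2 * P + b2\<^sup>2 * Q - (b1 + b2) * f) / S) - c * ((- b1 * P + b2 * Q) / S) + M * ((P + Q) / S) = f"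
    for P Q f
  proof -
    have "- d * ((b1\<^sup>2 * P + b2\<^sup>2 * Q - (b1 + b2) * f) / S) - c * ((- b1 * P + b2 * Q) / S) + M * ((P + Q) / S)
      = (- P * (d * b1\<^sup>2 - c * b1 - M) - Q * (d * b2\<^sup>2 + c * b2 - M) + (d * (b1 + b2)) * f) / S"
      using S by (simp add: field_simps)
    also have "\<dots> = f" using q1 q2 b1b2 S by simp
    finally show ?thesis .
  qed
  show ?thesis unfolding T_def T1_def T2_def
    using gen[of "exp (- b1 * x) * Rop b1 (\<lambda>z. \<phi> (- z)) (- x)" "exp (b2 * x) * Rop b2 \<phi> x" "\<phi> x"]
    by (simp add: mult.assoc)
qed

lemma T1_bound:
  assumes "continuous_on UNIV \<phi>" "\<And>y. \<bar>\<phi> y\<bar> \<le> B"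
  shows "\<bar>T1 \<phi> x\<bar> \<le> 2 * B / S"
proof -
  have l: "\<bar>Rop b1 (\<lambda>z. \<phi> (- z)) (- x)\<bar> \<le> B * exp (- b1 * (- x)) / b1"
    by (rule Rop_bound[OF cont_refl[OF assms(1)] _ b1]) (use assms(2) in auto)
  have rr: "\<bar>Rop b2 \<phi> x\<bar> \<le> B * exp (- b2 * x) / b2"
    by (rule Rop_bound[OF assms(1) assms(2) b2])
  have "\<bar>- b1 * exp (- b1 * x) * Rop b1 (\<lambda>z. \<phi> (- z)) (- x)\<bar> \<le> b1 * exp (- b1 * x) * (B * exp (- b1 * (- x)) / b1)"
    using mult_left_mono[OF l, of "b1 * exp (- b1 * x)"] b1 by (simp add: abs_mult)
  also have "\<dots> = B" using b1 ee1[of x] by (simp add: field_simps)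
  finally have 1: "\<bar>- b1 * exp (- b1 * x) * Rop b1 (\<lambda>z. \<phi> (- z)) (- x)\<bar> \<le> B" .
  have "\<bar>b2 * exp (b2 * x) * Rop b2 \<phi> x\<bar> \<le> b2 * exp (b2 * x) * (B * exp (- b2 * x) / b2)"
    using mult_left_mono[OF rr, of "b2 * exp (b2 * x)"] b2 by (simp add: abs_mult)
  also have "\<dots> = B" using b2 ee2[of x] by (simp add: field_simps)
  finally have 2: "\<bar>b2 * exp (b2 * x) * Rop b2 \<phi> x\<bar> \<le> B" .
  have "\<bar>T1 \<phi> x\<bar> = \<bar>- b1 * exp (- b1 * x) * Rop b1 (\<lambda>z. \<phi> (- z)) (- x) + b2 * exp (b2 * x) * Rop b2 \<phi> x\<bar> / S"
    unfolding T1_def using S by simp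
  also have "\<dots> \<le> (B + B) / S" using 1 2 S
    by (intro divide_right_mono order.trans[OF abs_triangle_ineq]) auto
  finally show ?thesis by simp
qed

lemma T_shift:
  assumes "Tadm \<phi>"
  shows "T (\<lambda>y. \<phi> (y + s)) x = T \<phi> (x + s)"
proof -
  obtain B where B: "\<And>y. \<bar>\<phi> y\<bar> \<le> B" and cc: "continuous_on UNIV \<phi>" using Tadm_parts[OF assms] by metis
  have r2: "Rop b2 (\<lambda>y. \<phi> (y + s)) x = exp (b2 * s) * Rop b2 \<phi> (x + s)"
    by (rule Rop_shift[OF cc B b2])
  have "Rop b1 (\<lambda>y. (\<lambda>z. \<phi> (- z)) (y + - s)) (- x) = exp (b1 * - s) * Rop b1 (\<lambda>z. \<phi> (- z)) (- x + - s)"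
    by (rule Rop_shift[OF cont_refl[OF cc] _ b1]) (use B in auto)
  then have r1: "Rop b1 (\<lambda>z. \<phi> (- z + s)) (- x) = exp (- b1 * s) * Rop b1 (\<lambda>z. \<phi> (- z)) (- (x + s))"
    by (simp add: algebra_simps)
  have e1: "exp (- b1 * x) * exp (- b1 * s) = exp (- b1 * (x + s))" by (simp add: exp_add[symmetric] algebra_simps)
  have e2: "exp (b2 * x) * exp (b2 * s) = exp (b2 * (x + s))" by (simp add: exp_add[symmetric] algebra_simps)
  show ?thesis unfolding T_def using r1 r2 e1 e2
    by (simp add: mult.assoc[symmetric] add.commute[of "- _" s] add.commute[of _ s])
qed

lemma T_pos:
  assumes cc: "continuous_on UNIV \<phi>" and I: "TI \<phi>" and nn: "\<And>y. 0 \<le> \<phi> y" and y0: "\<phi> y0 > 0"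
  shows "T \<phi> x > 0"
proof -
  have I1: "(\<lambda>y. exp (- b1 * y) * \<phi> (- y)) integrable_on {x..}" for x using I unfolding TI_def by blast
  have I2: "(\<lambda>y. exp (- b2 * y) * \<phi> y) integrable_on {x..}" for x using I unfolding TI_def by blast
  have l0: "Rop b1 (\<lambda>z. \<phi> (- z)) (- x) \<ge> 0" by (rule Rop_nonneg[OF I1]) (use nn in auto)
  have r0: "Rop b2 \<phi> x \<ge> 0" by (rule Rop_nonneg[OF I2]) (use nn in auto)
  have "exp (- b1 * x) * Rop b1 (\<lambda>z. \<phi> (- z)) (- x) + exp (b2 * x) * Rop b2 \<phi> x > 0"
  proof (cases "y0 \<ge> x")
    case True
    have "Rop b2 \<phi> x > 0" by (rule Rop_pos[OF cc I2 _ True y0]) (use nn in auto)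
    then show ?thesis using l0 by (simp add: add_nonneg_pos)
  next
    case False
    have ge: "- y0 \<ge> - x" using False by simp
    have p: "(\<lambda>z. \<phi> (- z)) (- y0) > 0" using y0 by simp
    have "Rop b1 (\<lambda>z. \<phi> (- z)) (- x) > 0"
      by (rule Rop_pos[OF cont_refl[OF cc] I1 _ ge p]) (use nn in auto)
    then show ?thesis using r0 by (simp add: add_pos_nonneg)
  qed
  then show ?thesis unfolding T_def using S by simp
qed

lemma T_lim:
  assumes A: "\<And>n. Tadm (\<phi> n)" and B: "\<And>n y. \<bar>\<phi> n y\<bar> \<le> B"
    and conv: "\<And>y. (\<lambda>n. \<phi> n y) \<longlonglongrightarrow> \<psi> y"
  shows "(\<lambda>n. T (\<phi> n) x) \<longlonglongrightarrow> T \<psi> x"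
proof -
  have I1: "(\<lambda>y. exp (- b1 * y) * \<phi> n (- y)) integrable_on {x..}" for n x
    using Tadm_TI[OF A] unfolding TI_def by blast
  have I2: "(\<lambda>y. exp (- b2 * y) * \<phi> n y) integrable_on {x..}" for n x
    using Tadm_TI[OF A] unfolding TI_def by blast
  have l: "(\<lambda>n. Rop b1 (\<lambda>z. \<phi> n (- z)) (- x)) \<longlonglongrightarrow> Rop b1 (\<lambda>z. \<psi> (- z)) (- x)"
    by (rule Rop_lim[of "\<lambda>n z. \<phi> n (- z)" B b1]) (use B b1 I1 conv in auto)
  have rr: "(\<lambda>n. Rop b2 (\<phi> n) x) \<longlonglongrightarrow> Rop b2 \<psi> x"
    by (rule Rop_lim[of \<phi> B b2]) (use B b2 I2 conv in auto)
  show ?thesis unfolding T_def by (intro tendsto_intros l rr) (use S in auto)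
qed

end

context kpp begin

definition "Dq = sqrt (c\<^sup>2 - 4 * d * r * a)"
definition "lam = (c - Dq) / (2 * d)"
definition "lamh = (c + Dq) / (2 * d)"
definition "lam' = lam + min lam (lamh - lam) / 2"
definition "mu' = c * lam' - d * lam'\<^sup>2"
definition "K = max 1 (r / (mu' - M))"

lemma Dq: "Dq > 0" "Dq < c"
proof -
  show "Dq > 0" unfolding Dq_def using disc by simp
  have "c\<^sup>2 - 4 * d * r * a < c\<^sup>2" using d r a by simp
  then have "Dq < sqrt (c\<^sup>2)" unfolding Dq_def by (rule real_sqrt_less_mono)
  then show "Dq < c" using c by simp
qed

lemma lam: "lam > 0" unfolding lam_def using Dq d by simp
lemma lamh: "lamh > lam" unfolding lamh_def lam_def using Dq d by (simp add: divide_strict_right_mono)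
lemma lamh_c: "lamh < c / d"
proof -
  have "(c + Dq) / (2 * d) < (2 * c) / (2 * d)" by (rule divide_strict_right_mono) (use Dq d in auto)
  then show ?thesis unfolding lamh_def using d by simp
qed
lemma lam_b1: "lamh < b1" using lamh_c b1c by simp
lemma lam': "lam < lam'" "lam' < lamh" "lam' \<le> 2 * lam"
  unfolding lam'_def using lam lamh by (auto simp: min_def field_simps)
lemma lam_eq: "c * lam - d * lam\<^sup>2 = M"
proof -
  have "d * lam\<^sup>2 - c * lam + r * a = ((c - Dq)\<^sup>2 - 2 * c * (c - Dq) + 4 * d * r * a) / (4 * d)"
    unfolding lam_def using d by (simp add: field_simps power2_eq_square)
  also have "(c - Dq)\<^sup>2 - 2 * c * (c - Dq) + 4 * d * r * a = Dq\<^sup>2 - c\<^sup>2 + 4 * d * r * a"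
    by (simp add: algebra_simps power2_eq_square)
  also have "Dq\<^sup>2 = c\<^sup>2 - 4 * d * r * a" unfolding Dq_def using disc by simp
  finally show ?thesis unfolding M_def by simp
qed
lemma mu': "mu' > M"
proof -
  have sum: "lam + lamh = c / d" unfolding lam_def lamh_def using d by (simp add: field_simps)
  have prod: "d * (lam * lamh) = r * a"
  proof -
    have "d * (lam * lamh) = (c\<^sup>2 - Dq\<^sup>2) / (4 * d)" unfolding lam_def lamh_def using d
      by (simp add: field_simps power2_eq_square)
    also have "Dq\<^sup>2 = c\<^sup>2 - 4 * d * r * a" unfolding Dq_def using disc by simp
    finally show ?thesis using d by simp
  qed
  have "d * lam'\<^sup>2 - c * lam' + r * a = d * ((lam' - lam) * (lam' - lamh))"
  proof -
    have "d * ((lam' - lam) * (lam' - lamh)) = d * lam'\<^sup>2 - (d * (lam + lamh)) * lam' + d * (lam * lamh)"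
      by (simp add: algebra_simps power2_eq_square)
    also have "d * (lam + lamh) = c" using sum d by simp
    finally show ?thesis using prod by simp
  qed
  also have "(lam' - lam) * (lam' - lamh) < 0" using lam' by (simp add: mult_pos_neg)
  then have "d * ((lam' - lam) * (lam' - lamh)) < 0" using d by (simp add: mult_pos_neg)
  finally show ?thesis unfolding mu'_def M_def by simp
qed
lemma K: "K \<ge> 1" "r \<le> K * (mu' - M)"
proof -
  show "K \<ge> 1" unfolding K_def by simp
  have "r / (mu' - M) \<le> K" unfolding K_def by simp
  then show "r \<le> K * (mu' - M)" using mu' by (simp add: pos_divide_le_eq)
qed

definition "cl v = max 0 (min a v)"
definition "Gf v = r * cl v * (a - cl v) + M * cl v"

lemma cl: "0 \<le> cl v" "cl v \<le> a" unfolding cl_def using a by auto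
lemma cl_id: "0 \<le> v \<Longrightarrow> v \<le> a \<Longrightarrow> cl v = v" unfolding cl_def by simp
lemma cl_mono: "v \<le> w \<Longrightarrow> cl v \<le> cl w" unfolding cl_def by auto
lemma Gf_cl: "Gf (cl v) = Gf v" unfolding Gf_def using cl_id[OF cl] by simp
lemma Gf_id: "0 \<le> v \<Longrightarrow> v \<le> a \<Longrightarrow> Gf v = r * v * (a - v) + M * v" unfolding Gf_def using cl_id by simp

lemma Gf_mono: assumes "v \<le> w" shows "Gf v \<le> Gf w"
proof -
  define x where "x = cl v"
  define y where "y = cl w"
  have xy: "0 \<le> x" "x \<le> y" "y \<le> a" unfolding x_def y_def using cl cl_mono[OF assms] by auto
  have "Gf w - Gf v = r * (y - x) * (2 * a - x - y)" unfolding Gf_def x_def[symmetric] y_def[symmetric] M_def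
    by (simp add: algebra_simps power2_eq_square)
  also have "\<dots> \<ge> 0" using xy r by (intro mult_nonneg_nonneg) auto
  finally show ?thesis by simp
qed

lemma Gf_bound: "0 \<le> Gf v" "Gf v \<le> M * a"
proof -
  define x where "x = cl v"
  have x: "0 \<le> x" "x \<le> a" unfolding x_def using cl by auto
  show "0 \<le> Gf v" unfolding Gf_def x_def[symmetric] using x r M by simp
  have "M * a - Gf v = r * (a - x)\<^sup>2" unfolding Gf_def x_def[symmetric] M_def
    by (simp add: algebra_simps power2_eq_square)
  then show "Gf v \<le> M * a" using r by (simp add: algebra_simps)
qed

lemma Gf_strict: assumes "v < a" shows "Gf v < M * a"
proof -
  define x where "x = cl v"
  have x: "0 \<le> x" "x < a" unfolding x_def cl_def using assms a by auto
  have "M * a - Gf v = r * (a - x)\<^sup>2" unfolding Gf_def x_def[symmetric] M_def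
    by (simp add: algebra_simps power2_eq_square)
  moreover have "r * (a - x)\<^sup>2 > 0" using x r by simp
  ultimately show ?thesis by simp
qed

lemma Gf_upper: assumes "0 \<le> v" shows "Gf v \<le> 2 * M * v"
proof -
  define x where "x = cl v"
  have x: "0 \<le> x" "x \<le> a" "x \<le> v" unfolding x_def cl_def using assms a by auto
  have "Gf v = 2 * M * x - r * x\<^sup>2" unfolding Gf_def x_def[symmetric] M_def
    by (simp add: algebra_simps power2_eq_square)
  also have "\<dots> \<le> 2 * M * x" using r by simp
  also have "\<dots> \<le> 2 * M * v" using x M by simp
  finally show ?thesis .
qed

lemma Gf_lower: assumes "0 \<le> v" shows "Gf v \<ge> 2 * M * v - r * v\<^sup>2"
proof (cases "v \<le> a")
  case True
  then show ?thesis using Gf_id[OF assms True] unfolding M_def by (simp add: algebra_simps power2_eq_square)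
next
  case False
  then have "cl v = a" unfolding cl_def using a by simp
  then have "Gf v = r * a * a" unfolding Gf_def M_def by simp
  moreover have "r * a * a - (2 * M * v - r * v\<^sup>2) = r * (v - a)\<^sup>2" unfolding M_def
    by (simp add: algebra_simps power2_eq_square)
  moreover have "r * (v - a)\<^sup>2 \<ge> 0" using r by simp
  ultimately show ?thesis by simp
qed

lemma Gf_cont: "continuous_on UNIV Gf"
  unfolding Gf_def[abs_def] cl_def by (intro continuous_intros)

lemma Gf_comp_cont: "continuous_on UNIV w \<Longrightarrow> continuous_on UNIV (\<lambda>y. Gf (w y))"
  by (rule continuous_on_compose2[OF Gf_cont]) auto

lemma Tadm_Gf: "continuous_on UNIV w \<Longrightarrow> Tadm (\<lambda>y. Gf (w y))"
  unfolding Tadm_def using Gf_comp_cont Gf_bound by (metis abs_of_nonneg)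

definition "ubar y = min a (exp (- lam * y))"
definition "usub y = max 0 (exp (- lam * y) - K * exp (- lam' * y))"

lemma ubar_cont: "continuous_on UNIV ubar" unfolding ubar_def[abs_def] by (intro continuous_intros)
lemma usub_cont: "continuous_on UNIV usub" unfolding usub_def[abs_def] by (intro continuous_intros)
lemma ubar: "0 < ubar y" "ubar y \<le> a" "ubar y \<le> exp (- lam * y)" unfolding ubar_def using a by auto
lemma usub: "0 \<le> usub y" "usub y \<le> exp (- lam * y)"
  unfolding usub_def using K by auto

lemma T_Gf_range: assumes "continuous_on UNIV w" shows "0 \<le> T (\<lambda>y. Gf (w y)) x" "T (\<lambda>y. Gf (w y)) x \<le> a"
proof -
  have TI: "TI (\<lambda>y. Gf (w y))" using Tadm_TI[OF Tadm_Gf[OF assms]] .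
  have TIc: "TI (\<lambda>y. k)" for k using Tadm_TI[of "\<lambda>y. k"] unfolding Tadm_def by auto
  have "T (\<lambda>y. 0) x \<le> T (\<lambda>y. Gf (w y)) x" by (rule T_mono[OF TIc TI]) (simp add: Gf_bound)
  then show "0 \<le> T (\<lambda>y. Gf (w y)) x" using T_const[of 0] by simp
  have "T (\<lambda>y. Gf (w y)) x \<le> T (\<lambda>y. M * a) x" by (rule T_mono[OF TI TIc]) (simp add: Gf_bound)
  then show "T (\<lambda>y. Gf (w y)) x \<le> a" using T_const[of "M * a"] M by simp
qed

lemma super: "T (\<lambda>y. Gf (ubar y)) x \<le> ubar x"
proof -
  have TI: "TI (\<lambda>y. Gf (ubar y))" using Tadm_TI[OF Tadm_Gf[OF ubar_cont]] .
  have "T (\<lambda>y. Gf (ubar y)) x \<le> a" using T_Gf_range[OF ubar_cont] by simp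
  moreover have "T (\<lambda>y. Gf (ubar y)) x \<le> exp (- lam * x)"
  proof -
    have TIe: "TI (\<lambda>y. 2 * M * exp (- lam * y))"
      using TI_cmul[OF TI_exp[of lam]] lam lamh lam_b1 by auto
    have "T (\<lambda>y. Gf (ubar y)) x \<le> T (\<lambda>y. 2 * M * exp (- lam * y)) x"
    proof (rule T_mono[OF TI TIe])
      fix y
      have "Gf (ubar y) \<le> 2 * M * ubar y" using Gf_upper ubar(1)[of y] by simp
      also have "\<dots> \<le> 2 * M * exp (- lam * y)" using ubar(3)[of y] M by simp
      finally show "Gf (ubar y) \<le> 2 * M * exp (- lam * y)" .
    qed
    also have "\<dots> = 2 * M * (exp (- lam * x) / (M + c * lam - d * lam\<^sup>2))"
      using T_cmul T_exp[of lam x] lam lamh lam_b1 by simp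
    also have "\<dots> = exp (- lam * x)" using lam_eq M by (simp add: algebra_simps)
    finally show ?thesis .
  qed
  ultimately show ?thesis unfolding ubar_def by simp
qed

lemma sub: "usub x \<le> T (\<lambda>y. Gf (usub y)) x"
proof -
  have TI: "TI (\<lambda>y. Gf (usub y))" using Tadm_TI[OF Tadm_Gf[OF usub_cont]] .
  have "0 \<le> T (\<lambda>y. Gf (usub y)) x" using T_Gf_range[OF usub_cont] by simp
  moreover have "exp (- lam * x) - K * exp (- lam' * x) \<le> T (\<lambda>y. Gf (usub y)) x"
  proof -
    define C where "C = 2 * M * K + r"
    have e1: "TI (\<lambda>y. exp (- lam * y))" using TI_exp[of lam] lam lamh lam_b1 by auto
    have e2: "TI (\<lambda>y. exp (- lam' * y))" using TI_exp[of lam'] lam lam' lamh lam_b1 by auto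
    have TIp: "TI (\<lambda>y. 2 * M * exp (- lam * y) - C * exp (- lam' * y))"
      by (intro TI_diff TI_cmul e1 e2)
    have "T (\<lambda>y. 2 * M * exp (- lam * y) - C * exp (- lam' * y)) x \<le> T (\<lambda>y. Gf (usub y)) x"
    proof (rule T_mono[OF TIp TI])
      fix y
      define \<phi> where "\<phi> = exp (- lam * y) - K * exp (- lam' * y)"
      show "2 * M * exp (- lam * y) - C * exp (- lam' * y) \<le> Gf (usub y)"
      proof (cases "\<phi> \<le> 0")
        case True
        then have "usub y = 0" unfolding usub_def \<phi>_def by simp
        then have "Gf (usub y) = 0" unfolding Gf_def cl_def by simp
        moreover have "2 * M * exp (- lam * y) - C * exp (- lam' * y) = 2 * M * \<phi> - r * exp (- lam' * y)"
          unfolding C_def \<phi>_def by (simp add: algebra_simps)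
        moreover have "2 * M * \<phi> \<le> 0" using True M by (simp add: mult_nonneg_nonpos)
        moreover have "r * exp (- lam' * y) \<ge> 0" using r by simp
        ultimately show ?thesis by linarith
      next
        case False
        then have us: "usub y = \<phi>" unfolding usub_def \<phi>_def by simp
        have lo: "Gf \<phi> \<ge> 2 * M * \<phi> - r * \<phi>\<^sup>2" using Gf_lower False by simp
        have "exp (- lam' * y) < exp (- lam * y)"
        proof -
          have "K * exp (- lam' * y) < exp (- lam * y)" using False unfolding \<phi>_def by simp
          moreover have "exp (- lam' * y) \<le> K * exp (- lam' * y)" using K by simp
          ultimately show ?thesis by linarith
        qed
        then have "- lam' * y < - lam * y" by simp
        then have ypos: "y > 0" using lam' by (smt (verit) mult_le_cancel_right)
        have "\<phi>\<^sup>2 \<le> (exp (- lam * y))\<^sup>2"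
          using False K by (intro power_mono) (auto simp: \<phi>_def)
        also have "(exp (- lam * y))\<^sup>2 = exp (- (2 * lam) * y)" by (simp add: exp_double[symmetric] algebra_simps power2_eq_square exp_add[symmetric])
        also have "\<dots> \<le> exp (- lam' * y)" using lam'(3) ypos by (simp add: mult_right_mono)
        finally have "\<phi>\<^sup>2 \<le> exp (- lam' * y)" .
        then have "r * \<phi>\<^sup>2 \<le> r * exp (- lam' * y)" using r by simp
        moreover have "2 * M * exp (- lam * y) - C * exp (- lam' * y) = 2 * M * \<phi> - r * exp (- lam' * y)"
          unfolding C_def \<phi>_def by (simp add: algebra_simps)
        ultimately show ?thesis using lo us by simp
      qed
    qed
    moreover have "T (\<lambda>y. 2 * M * exp (- lam * y) - C * exp (- lam' * y)) x
        = 2 * M * (exp (- lam * x) / (M + c * lam - d * lam\<^sup>2)) - C * (exp (- lam' * x) / (M + c * lam' - d * lam'\<^sup>2))"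
      using T_diff[OF TI_cmul[OF e1] TI_cmul[OF e2]] T_cmul T_exp[of lam x] T_exp[of lam' x] lam lam' lamh lam_b1 by simp
    moreover have "2 * M * (exp (- lam * x) / (M + c * lam - d * lam\<^sup>2)) = exp (- lam * x)"
      using lam_eq M by (simp add: algebra_simps)
    moreover have "C * (exp (- lam' * x) / (M + c * lam' - d * lam'\<^sup>2)) \<le> K * exp (- lam' * x)"
    proof -
      have den: "M + c * lam' - d * lam'\<^sup>2 = M + mu'" unfolding mu'_def by simp
      have "C \<le> K * (M + mu')" unfolding C_def using K(2) by (simp add: algebra_simps)
      then have "C / (M + mu') \<le> K" using M mu' by (simp add: pos_divide_le_eq)
      then have "C / (M + mu') * exp (- lam' * x) \<le> K * exp (- lam' * x)" by (rule mult_right_mono) simp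
      then show ?thesis unfolding den by (simp add: times_divide_eq_left)
    qed
    ultimately show ?thesis by simp
  qed
  ultimately show ?thesis unfolding usub_def by simp
qed

lemma base_sub: "Gf (usub y) \<le> Gf (ubar y)"
proof -
  have "cl (usub y) \<le> ubar y" unfolding cl_def ubar_def using usub[of y] a by auto
  then have "Gf (cl (usub y)) \<le> Gf (ubar y)" by (rule Gf_mono)
  then show ?thesis using Gf_cl by simp
qed

end

context kpp begin

definition step :: "(real \<Rightarrow> real) \<Rightarrow> real \<Rightarrow> real" where "step w = T (\<lambda>y. Gf (w y))"
definition it :: "nat \<Rightarrow> real \<Rightarrow> real" where "it n = (step ^^ n) ubar"

lemma it0: "it 0 = ubar" unfolding it_def by simp
lemma itS: "it (Suc n) = step (it n)" unfolding it_def by simp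

lemma step_cont: assumes "continuous_on UNIV w" shows "continuous_on UNIV (step w)"
proof -
  have "\<And>x. (step w has_real_derivative T1 (\<lambda>y. Gf (w y)) x) (at x)"
    unfolding step_def by (rule T_deriv[OF Tadm_Gf[OF assms]])
  then show ?thesis by (meson DERIV_isCont continuous_at_imp_continuous_on)
qed

lemma it_cont: "continuous_on UNIV (it n)"
  by (induction n) (auto simp: it0 itS ubar_cont step_cont)

lemma it_range: "0 \<le> it n y" "it n y \<le> a"
proof -
  have "0 \<le> it n y \<and> it n y \<le> a"
  proof (cases n)
    case 0 then show ?thesis using ubar[of y] by (simp add: it0)
  next
    case (Suc m) then show ?thesis using T_Gf_range[OF it_cont[of m], of y] by (simp add: itS step_def)
  qed
  then show "0 \<le> it n y" "it n y \<le> a" by auto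
qed

lemma it_dec: "it (Suc n) y \<le> it n y"
proof (induction n arbitrary: y)
  case 0 then show ?case using super by (simp add: itS it0 step_def)
next
  case (Suc n)
  have e1: "it (Suc (Suc n)) y = T (\<lambda>z. Gf (it (Suc n) z)) y" by (simp only: itS[of "Suc n"] step_def)
  have e2: "it (Suc n) y = T (\<lambda>z. Gf (it n z)) y" by (simp only: itS[of n] step_def)
  have "T (\<lambda>z. Gf (it (Suc n) z)) y \<le> T (\<lambda>z. Gf (it n z)) y"
    by (rule T_mono[OF Tadm_TI[OF Tadm_Gf[OF it_cont]] Tadm_TI[OF Tadm_Gf[OF it_cont]]])
       (use Suc Gf_mono in blast)
  then show ?case using e1 e2 by simp
qed

lemma it_sub: "usub y \<le> it (Suc n) y"
proof -
  have "Gf (usub y) \<le> Gf (it n y)" for y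
  proof (induction n arbitrary: y)
    case 0 then show ?case using base_sub by (simp add: it0)
  next
    case (Suc n)
    have "usub y \<le> it (Suc n) y"
    proof -
      have "usub y \<le> T (\<lambda>y. Gf (usub y)) y" by (rule sub)
      also have "\<dots> \<le> T (\<lambda>y. Gf (it n y)) y"
        by (rule T_mono[OF Tadm_TI[OF Tadm_Gf[OF usub_cont]] Tadm_TI[OF Tadm_Gf[OF it_cont]]]) (use Suc in simp)
      finally show ?thesis by (simp add: itS step_def)
    qed
    then show ?case by (rule Gf_mono)
  qed
  then show ?thesis
    using order.trans[OF sub T_mono[OF Tadm_TI[OF Tadm_Gf[OF usub_cont]] Tadm_TI[OF Tadm_Gf[OF it_cont]]]]
    by (simp add: itS step_def)
qed

lemma it_anti: "s \<ge> 0 \<Longrightarrow> it n (x + s) \<le> it n x"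
proof (induction n arbitrary: x)
  case 0
  have e: "exp (- lam * (x + s)) \<le> exp (- lam * x)" using 0 lam by (simp add: mult_left_mono)
  show ?case unfolding it0 ubar_def by (rule min.mono[OF order_refl e])
next
  case (Suc n)
  have cs: "continuous_on UNIV (\<lambda>y. it n (y + s))"
    by (rule continuous_on_compose2[OF it_cont]) (auto intro!: continuous_intros)
  have "it (Suc n) (x + s) = T (\<lambda>y. (\<lambda>y. Gf (it n y)) (y + s)) x"
    unfolding itS step_def by (rule T_shift[OF Tadm_Gf[OF it_cont], symmetric])
  also have "\<dots> \<le> T (\<lambda>y. Gf (it n y)) x"
    by (rule T_mono[OF Tadm_TI[OF Tadm_Gf[OF cs]] Tadm_TI[OF Tadm_Gf[OF it_cont]]])
       (use Suc Gf_mono in auto)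
  finally show ?case by (simp add: itS step_def)
qed

definition "Lc = 2 * (M * a) / S"

lemma it_lip: "\<bar>it (Suc n) x - it (Suc n) y\<bar> \<le> Lc * \<bar>x - y\<bar>"
proof -
  define \<phi> where "\<phi> y = Gf (it n y)" for y
  have adm: "Tadm \<phi>" unfolding \<phi>_def by (rule Tadm_Gf[OF it_cont])
  have cphi: "continuous_on UNIV \<phi>" using adm unfolding Tadm_def by simp
  have Bphi: "\<bar>\<phi> y\<bar> \<le> M * a" for y unfolding \<phi>_def using Gf_bound by simp
  have der: "(it (Suc n) has_real_derivative T1 \<phi> z) (at z)" for z
    unfolding itS step_def \<phi>_def[symmetric] by (rule T_deriv[OF adm])
  have bd: "\<bar>T1 \<phi> z\<bar> \<le> Lc" for z unfolding Lc_def by (rule T1_bound[OF cphi Bphi])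
  have main: "\<bar>it (Suc n) x - it (Suc n) y\<bar> \<le> Lc * \<bar>x - y\<bar>" if yx: "y < x" for x y
  proof -
    obtain z where "it (Suc n) x - it (Suc n) y = (x - y) * T1 \<phi> z"
      using MVT2[OF yx, of "it (Suc n)" "T1 \<phi>"] der by blast
    then have "\<bar>it (Suc n) x - it (Suc n) y\<bar> = \<bar>x - y\<bar> * \<bar>T1 \<phi> z\<bar>" by (simp add: abs_mult)
    also have "\<dots> \<le> \<bar>x - y\<bar> * Lc" using bd[of z] by (simp add: mult_left_mono)
    finally show ?thesis by (simp add: mult.commute)
  qed
  show ?thesis
  proof (cases x y rule: linorder_cases)
    case less
    have "\<bar>it (Suc n) y - it (Suc n) x\<bar> \<le> Lc * \<bar>y - x\<bar>" by (rule main) (use less in simp)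
    then show ?thesis by (simp only: abs_minus_commute)
  next
    case greater then show ?thesis by (rule main)
  qed simp
qed

definition U :: "real \<Rightarrow> real" where "U x = lim (\<lambda>n. it n x)"

lemma U_lim: "(\<lambda>n. it n x) \<longlonglongrightarrow> U x"
proof -
  have dec: "decseq (\<lambda>n. it n x)" by (rule decseq_SucI) (rule it_dec)
  have bnd: "\<forall>i. 0 \<le> it i x" using it_range by simp
  obtain L where "(\<lambda>n. it n x) \<longlonglongrightarrow> L" by (rule decseq_convergent[OF dec bnd])
  then show ?thesis unfolding U_def by (simp add: limI)
qed

lemma U_limS: "(\<lambda>n. it (Suc n) x) \<longlonglongrightarrow> U x"
  using LIMSEQ_Suc[OF U_lim] .

lemma U_range: "0 \<le> U x" "U x \<le> a"
proof -
  show "0 \<le> U x" by (rule LIMSEQ_le_const[OF U_lim]) (use it_range in auto)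
  show "U x \<le> a" by (rule LIMSEQ_le_const2[OF U_lim]) (use it_range in auto)
qed

lemma U_sub: "usub x \<le> U x"
  by (rule LIMSEQ_le_const[OF U_limS]) (use it_sub in auto)

lemma U_ubar: "U x \<le> ubar x"
proof -
  have dec: "decseq (\<lambda>n. it n x)" by (rule decseq_SucI) (rule it_dec)
  have "U x \<le> it 0 x"
    by (rule LIMSEQ_le_const2[OF U_lim]) (use dec in \<open>auto simp: decseq_def\<close>)
  then show ?thesis by (simp add: it0)
qed

lemma U_anti: "s \<ge> 0 \<Longrightarrow> U (x + s) \<le> U x"
  by (rule LIMSEQ_le[OF U_lim U_lim]) (use it_anti in auto)

lemma U_lip: "\<bar>U x - U y\<bar> \<le> Lc * \<bar>x - y\<bar>"
proof -
  have "(\<lambda>n. \<bar>it (Suc n) x - it (Suc n) y\<bar>) \<longlonglongrightarrow> \<bar>U x - U y\<bar>"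
    by (intro tendsto_intros U_limS)
  then show ?thesis by (rule LIMSEQ_le_const2) (intro exI[of _ 0] allI impI it_lip)
qed

end

context kpp begin

lemma U_cont: "continuous_on UNIV U"
proof (rule lipschitz_on_continuous_on)
  show "Lc-lipschitz_on UNIV U"
  proof (rule lipschitz_onI)
    show "dist (U x) (U y) \<le> Lc * dist x y" for x y unfolding dist_real_def by (rule U_lip)
    have "0 \<le> 2 * (M * a)" using M a by simp
    then show "0 \<le> Lc" unfolding Lc_def using S by simp
  qed
qed

lemma U_fix: "U x = T (\<lambda>y. Gf (U y)) x"
proof -
  have "(\<lambda>n. T (\<lambda>y. Gf (it n y)) x) \<longlonglongrightarrow> T (\<lambda>y. Gf (U y)) x"
  proof (rule T_lim[where B = "M * a"])
    show "Tadm (\<lambda>y. Gf (it n y))" for n by (rule Tadm_Gf[OF it_cont])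
    show "\<bar>Gf (it n y)\<bar> \<le> M * a" for n y using Gf_bound[of "it n y"] by (simp only: abs_of_nonneg)
    show "(\<lambda>n. Gf (it n y)) \<longlonglongrightarrow> Gf (U y)" for y
      by (rule continuous_on_tendsto_compose[OF Gf_cont U_lim]) simp_all
  qed
  moreover have "(\<lambda>n. T (\<lambda>y. Gf (it n y)) x) = (\<lambda>n. it (Suc n) x)"
    by (simp only: itS step_def)
  ultimately show ?thesis using U_limS LIMSEQ_unique by metis
qed


lemma Teq: "T (\<lambda>y. Gf (U y)) = U" by (rule ext) (rule U_fix[symmetric])

definition "D1 = T1 (\<lambda>y. Gf (U y))"
definition "D2 = T2 (\<lambda>y. Gf (U y))"

lemma U_D1: "(U has_real_derivative D1 x) (at x)"
  using T_deriv[OF Tadm_Gf[OF U_cont], of x] unfolding Teq D1_def .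

lemma U_D2: "(D1 has_real_derivative D2 x) (at x)"
  unfolding D1_def D2_def by (rule T1_deriv[OF Tadm_Gf[OF U_cont]])

lemma U_ode: "- d * D2 x - c * D1 x = r * U x * (a - U x)"
proof -
  have "- d * D2 x - c * D1 x + M * U x = Gf (U x)"
    using T_ode[of "\<lambda>y. Gf (U y)" x] unfolding D1_def D2_def Teq .
  moreover have "Gf (U x) = r * U x * (a - U x) + M * U x" using Gf_id U_range by simp
  ultimately show ?thesis by simp
qed

lemma derivU: "deriv U = D1" by (rule ext) (rule DERIV_imp_deriv[OF U_D1])
lemma derivD1: "deriv D1 = D2" by (rule ext) (rule DERIV_imp_deriv[OF U_D2])

lemma usub_pos: "\<exists>Y. \<forall>y\<ge>Y. usub y > 0"
proof -
  define Y where "Y = ln K / (lam' - lam) + 1"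
  have gap: "lam' - lam > 0" using lam' by simp
  have "usub y > 0" if y: "y \<ge> Y" for y
  proof -
    have "ln K < (lam' - lam) * y"
    proof -
      have "ln K / (lam' - lam) < y" using y unfolding Y_def by simp
      then show ?thesis using gap by (simp add: pos_divide_less_eq mult.commute)
    qed
    then have "K < exp ((lam' - lam) * y)" using K(1) by (metis exp_ln exp_less_mono less_le_trans zero_less_one)
    then have "K * exp (- lam' * y) < exp ((lam' - lam) * y) * exp (- lam' * y)" by simp
    also have "\<dots> = exp (- lam * y)" by (simp add: exp_add[symmetric] algebra_simps)
    finally show ?thesis unfolding usub_def by simp
  qed
  then show ?thesis by blast
qed

lemma U_pos: "U x > 0"
proof -
  obtain Y where Y: "\<And>y. y \<ge> Y \<Longrightarrow> usub y > 0" using usub_pos by blast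
  define y where "y = max x Y"
  have "U (x + (y - x)) \<le> U x" by (rule U_anti) (simp add: y_def)
  moreover have "usub y > 0" using Y by (simp add: y_def)
  ultimately show ?thesis using U_sub[of y] by simp
qed

lemma U_top: "(U \<longlongrightarrow> 0) at_top"
proof (rule tendsto_sandwich[of "\<lambda>x. 0" U at_top "\<lambda>x. exp (- lam * x)"])
  show "\<forall>\<^sub>F x in at_top. 0 \<le> U x" using U_range by simp
  show "\<forall>\<^sub>F x in at_top. U x \<le> exp (- lam * x)" by (intro always_eventually allI order.trans[OF U_ubar ubar(3)])
  show "((\<lambda>x. 0) \<longlongrightarrow> 0) at_top" by simp
  have "LIM x at_top. lam * x :> at_top"
    by (rule filterlim_tendsto_pos_mult_at_top[OF tendsto_const lam filterlim_ident])
  then have "LIM x at_top. - (lam * x) :> at_bot" by (simp add: filterlim_uminus_at_top)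
  then show "((\<lambda>x. exp (- lam * x)) \<longlongrightarrow> 0) at_top"
    using filterlim_compose[OF exp_at_bot] by simp
qed

lemma U_lt: "U x < a"
proof -
  have TIc: "TI (\<lambda>y. k)" for k using Tadm_TI[of "\<lambda>y. k"] unfolding Tadm_def by auto
  have TIG: "TI (\<lambda>y. Gf (U y))" by (rule Tadm_TI[OF Tadm_Gf[OF U_cont]])
  have "T (\<lambda>y. M * a - Gf (U y)) x = T (\<lambda>y. M * a) x - T (\<lambda>y. Gf (U y)) x" by (rule T_diff[OF TIc TIG])
  also have "\<dots> = a - U x" using T_const[of "M * a"] M U_fix[of x] by simp
  finally have eq: "T (\<lambda>y. M * a - Gf (U y)) x = a - U x" .
  have "\<forall>\<^sub>F y in at_top. U y < a" using U_top a by (intro order_tendstoD) auto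
  then obtain y0 where y0: "U y0 < a" unfolding eventually_at_top_linorder by auto
  have "T (\<lambda>y. M * a - Gf (U y)) x > 0"
  proof (rule T_pos)
    show "continuous_on UNIV (\<lambda>y. M * a - Gf (U y))" by (intro continuous_intros Gf_comp_cont U_cont)
    show "TI (\<lambda>y. M * a - Gf (U y))" by (rule TI_diff[OF TIc TIG])
    show "0 \<le> M * a - Gf (U y)" for y using Gf_bound[of "U y"] by simp
    show "0 < M * a - Gf (U y0)" using Gf_strict[OF y0] by simp
  qed
  then show ?thesis using eq by simp
qed

lemma D1_le: "D1 x \<le> 0"
proof (rule ccontr)
  assume "\<not> D1 x \<le> 0"
  then obtain e where e: "e > 0" "\<forall>h>0. h < e \<longrightarrow> U x < U (x + h)"
    using DERIV_pos_inc_right[OF U_D1, of x] by auto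
  have "U x < U (x + e / 2)" using e by simp
  moreover have "U (x + e / 2) \<le> U x" by (rule U_anti) (use e in simp)
  ultimately show False by simp
qed

lemma U_strict: assumes "x < y" shows "U y < U x"
proof (rule ccontr)
  assume "\<not> U y < U x"
  then have eq: "U y = U x" using U_anti[of "y - x" x] assms by simp
  have const: "U z = U x" if "x \<le> z" "z \<le> y" for z
  proof -
    have "U z \<le> U x" using U_anti[of "z - x" x] that by simp
    moreover have "U y \<le> U z" using U_anti[of "y - z" z] that by simp
    ultimately show ?thesis using eq by simp
  qed
  define m where "m = (x + y) / 2"
  define h where "h = (y - x) / 2"
  have h: "h > 0" unfolding h_def using assms by simp
  have D1z: "D1 z = 0" if "\<bar>m - z\<bar> < h" for z
  proof (rule DERIV_local_const[OF U_D1])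
    define h' where "h' = h - \<bar>m - z\<bar>"
    show "0 < h'" unfolding h'_def using that by simp
    show "\<forall>w. \<bar>z - w\<bar> < h' \<longrightarrow> U z = U w"
    proof (intro allI impI)
      fix w assume "\<bar>z - w\<bar> < h'"
      then have mw: "\<bar>m - w\<bar> < h" using abs_triangle_ineq[of "m - z" "z - w"] unfolding h'_def by simp
      have A: "(x + y) / 2 - w < (y - x) / 2" "- ((x + y) / 2 - w) < (y - x) / 2"
        using mw[unfolded abs_less_iff] unfolding m_def h_def by auto
      have B: "(x + y) / 2 - z < (y - x) / 2" "- ((x + y) / 2 - z) < (y - x) / 2"
        using that[unfolded abs_less_iff] unfolding m_def h_def by auto
      have "x \<le> w" using A by (simp add: field_simps)
      moreover have "w \<le> y" using A by (simp add: field_simps)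
      moreover have "x \<le> z" using B by (simp add: field_simps)
      moreover have "z \<le> y" using B by (simp add: field_simps)
      ultimately show "U z = U w" using const by metis
    qed
  qed
  have "D2 m = 0"
  proof (rule DERIV_local_const[OF U_D2 h])
    show "\<forall>w. \<bar>m - w\<bar> < h \<longrightarrow> D1 m = D1 w" using D1z h by simp
  qed
  moreover have "D1 m = 0" using D1z h by simp
  moreover have "r * U m * (a - U m) > 0" using U_pos[of m] U_lt[of m] r by simp
  ultimately show False using U_ode[of m] by auto
qed

lemma U_bot: "(U \<longlongrightarrow> a) at_bot"
proof (rule order_tendstoI)
  fix y assume "y > a"
  then show "\<forall>\<^sub>F x in at_bot. U x < y" by (intro always_eventually allI less_trans[OF U_lt])
next
  fix y assume ya: "y < a"
  show "\<forall>\<^sub>F x in at_bot. y < U x"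
  proof (rule ccontr)
    assume nev: "\<not> (\<forall>\<^sub>F x in at_bot. y < U x)"
    have all: "U z \<le> y" for z
    proof -
      obtain x where x: "x \<le> z" "\<not> y < U x"
        using nev unfolding eventually_at_bot_linorder by blast
      have "U z \<le> U x" using U_anti[of "z - x" x] x by simp
      then show ?thesis using x by simp
    qed
    define \<epsilon> where "\<epsilon> = a - y"
    have \<epsilon>: "\<epsilon> > 0" unfolding \<epsilon>_def using ya by simp
    define m0 where "m0 = U 0"
    have m0: "m0 > 0" unfolding m0_def by (rule U_pos)
    define \<Phi> where "\<Phi> x = - d * D1 x - c * U x" for x
    define \<kappa> where "\<kappa> = r * m0 * \<epsilon>"
    have \<kappa>: "\<kappa> > 0" unfolding \<kappa>_def using r m0 \<epsilon> by simp
    have dPhi: "(\<Phi> has_real_derivative r * U x * (a - U x)) (at x)" for x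
    proof -
      have "(\<Phi> has_real_derivative - d * D2 x - c * D1 x) (at x)"
        unfolding \<Phi>_def by (auto intro!: derivative_eq_intros U_D1 U_D2)
      then show ?thesis using U_ode[of x] by simp
    qed
    have fl: "r * U x * (a - U x) \<ge> \<kappa>" if "x \<le> 0" for x
    proof -
      have "U x \<ge> m0" unfolding m0_def using U_anti[of "- x" x] that by simp
      moreover have "a - U x \<ge> \<epsilon>" using all[of x] unfolding \<epsilon>_def by simp
      ultimately have "m0 * \<epsilon> \<le> U x * (a - U x)" using m0 \<epsilon> by (intro mult_mono) auto
      then have "r * (m0 * \<epsilon>) \<le> r * (U x * (a - U x))" using r by simp
      then show ?thesis unfolding \<kappa>_def by (simp add: mult.assoc)
    qed
    have lowPhi: "\<Phi> x \<ge> - c * a" for x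
    proof -
      have "- d * D1 x \<ge> 0" using D1_le[of x] d by (simp add: mult_nonneg_nonpos)
      moreover have "c * U x \<le> c * a" using U_range[of x] c by simp
      ultimately show ?thesis unfolding \<Phi>_def by simp
    qed
    define x where "x = - (\<bar>\<Phi> 0\<bar> + c * a + 1) / \<kappa>"
    have "c * a > 0" using c a by simp
    moreover have "\<bar>\<Phi> 0\<bar> \<ge> 0" by simp
    ultimately have "- (\<bar>\<Phi> 0\<bar> + c * a + 1) < 0" by linarith
    then have xneg: "x < 0" unfolding x_def using \<kappa> by (simp add: divide_neg_pos)
    obtain z where z: "x < z" "z < 0" "\<Phi> 0 - \<Phi> x = (0 - x) * (r * U z * (a - U z))"
      using MVT2[OF xneg, of \<Phi> "\<lambda>x. r * U x * (a - U x)"] dPhi by blast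
    have "(0 - x) * (r * U z * (a - U z)) \<ge> (0 - x) * \<kappa>"
      using fl[of z] z xneg by (intro mult_left_mono) auto
    also have "(0 - x) * \<kappa> = \<bar>\<Phi> 0\<bar> + c * a + 1" unfolding x_def using \<kappa> by simp
    finally have "\<Phi> 0 - \<Phi> x \<ge> \<bar>\<Phi> 0\<bar> + c * a + 1" using z by simp
    moreover have "\<Phi> 0 \<le> \<bar>\<Phi> 0\<bar>" by simp
    ultimately show False using lowPhi[of x] by linarith
  qed
qed

end

lemma tw_exists:
  assumes d: "d > 0" and r: "r > 0" and dl: "0 < \<delta>" "\<delta> < 1" and cc: "c > 2 * sqrt (r * d)"
  shows "\<exists>p. is_tw_profile d r \<delta> c p"
proof -
  have sq: "sqrt (r * d) \<ge> 0" using d r by simp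
  then have c0: "c > 0" using cc by linarith
  have "(2 * sqrt (r * d))\<^sup>2 < c\<^sup>2" using cc sq by (intro power_strict_mono) auto
  then have "4 * (r * d) < c\<^sup>2" using d r by (simp add: power_mult_distrib)
  moreover have "4 * d * r * (1 - \<delta>) < 4 * (r * d)" using d r dl by simp
  ultimately have disc: "c\<^sup>2 > 4 * d * r * (1 - \<delta>)" by linarith
  interpret K: kpp d r "1 - \<delta>" c
    by unfold_locales (use d r dl c0 disc in auto)
  define a where "a = 1 - \<delta>"
  have a: "a > 0" using dl unfolding a_def by simp
  have "\<forall>\<^sub>F x in at_bot. K.U x > a / 2" using K.U_bot a unfolding a_def by (intro order_tendstoD) auto
  then obtain x1 where x1: "K.U x1 > a / 2" unfolding eventually_at_bot_linorder by auto
  have "\<forall>\<^sub>F x in at_top. K.U x < a / 2" using K.U_top a by (intro order_tendstoD) auto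
  then obtain x2 where x2: "x2 \<ge> x1" "K.U x2 < a / 2" unfolding eventually_at_top_linorder by (metis nle_le)
  have cU: "isCont K.U x" for x using K.U_cont by (simp add: continuous_on_eq_continuous_at)
  obtain x0 where x0: "K.U x0 = a / 2" using IVT2[of K.U x2 "a / 2" x1] x1 x2 cU by force
  define p where "p x = K.U (x + x0)" for x
  have hp: "(p has_real_derivative K.D1 (x + x0)) (at x)" for x
  proof -
    have "((\<lambda>x. K.U (x + x0)) has_real_derivative K.D1 (x + x0) * 1) (at x)"
      by (rule DERIV_chain2[OF K.U_D1]) (auto intro!: derivative_eq_intros)
    then show ?thesis unfolding p_def by simp
  qed
  have dp: "deriv p = (\<lambda>x. K.D1 (x + x0))" by (rule ext) (rule DERIV_imp_deriv[OF hp])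
  have hp2: "((\<lambda>x. K.D1 (x + x0)) has_real_derivative K.D2 (x + x0)) (at x)" for x
  proof -
    have "((\<lambda>x. K.D1 (x + x0)) has_real_derivative K.D2 (x + x0) * 1) (at x)"
      by (rule DERIV_chain2[OF K.U_D2]) (auto intro!: derivative_eq_intros)
    then show ?thesis by simp
  qed
  have dp2: "deriv (deriv p) = (\<lambda>x. K.D2 (x + x0))" unfolding dp by (rule ext) (rule DERIV_imp_deriv[OF hp2])
  have dpx: "deriv p x = K.D1 (x + x0)" for x using dp by simp
  have dp2x: "deriv (deriv p) x = K.D2 (x + x0)" for x using dp2 by simp
  have "is_tw_profile d r \<delta> c p"
    unfolding is_tw_profile_def
  proof (intro conjI allI impI)
    show "(p has_real_derivative deriv p x) (at x)" for x using hp unfolding dpx .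
    show "(deriv p has_real_derivative deriv (deriv p) x) (at x)" for x
    proof -
      have "(deriv p has_real_derivative K.D2 (x + x0)) (at x)" unfolding dp by (rule hp2)
      then show ?thesis by (simp only: dp2x)
    qed
    show "- d * deriv (deriv p) x - c * deriv p x = r * p x * (1 - \<delta> - p x)" for x
      unfolding dpx dp2x p_def using K.U_ode[of "x + x0"] by simp
    have "filterlim (\<lambda>x. x0 + x) at_bot at_bot"
      using filterlim_tendsto_add_at_bot_iff[OF tendsto_const[of x0], of "\<lambda>x. x" at_bot] filterlim_ident by blast
    then have "filterlim (\<lambda>x. x + x0) at_bot at_bot" by (simp add: add.commute)
    then show "(p \<longlongrightarrow> 1 - \<delta>) at_bot" unfolding p_def using filterlim_compose[OF K.U_bot] by blast
    have "filterlim (\<lambda>x. x0 + x) at_top at_top"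
      by (rule filterlim_tendsto_add_at_top[OF tendsto_const filterlim_ident])
    then have "filterlim (\<lambda>x. x + x0) at_top at_top" by (simp add: add.commute)
    then show "(p \<longlongrightarrow> 0) at_top" unfolding p_def using filterlim_compose[OF K.U_top] by blast
    show "p y < p x" if "x < y" for x y unfolding p_def by (rule K.U_strict) (use that in simp)
    show "p 0 = (1 - \<delta>) / 2" unfolding p_def using x0 unfolding a_def by simp
  qed
  then show ?thesis by blast
qed

theorem lemma4p9:
  fixes d r \<delta> c :: real
  assumes "d > 0" and "r > 0"
    and "0 < \<delta>" and "\<delta> < 1"
    and "c > 2 * sqrt (r * d)"
  shows "(\<forall>h>0. \<forall>\<xi>\<in>{- sqrt (c / (r * h)) .. sqrt (c / (r * h))}.
            - d * deriv (deriv (tw_profile_h d r \<delta> c h)) \<xi>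
              - c * deriv (tw_profile_h d r \<delta> c h) \<xi>
            \<le> r * tw_profile_h d r \<delta> c h \<xi> * (1 - \<delta> - tw_profile_h d r \<delta> c h \<xi>))
    \<and> (\<exists>hs>0. \<forall>h\<in>{0<..hs}.
          Sup (tw_profile_h d r \<delta> c h ` {- sqrt (c / (r * h)) .. 0}) \<ge> 1 - 2 * \<delta> \<and>
          Sup (tw_profile_h d r \<delta> c h ` {- sqrt (c / (r * h)) .. 0}) >
            max (tw_profile_h d r \<delta> c h 0)
                (tw_profile_h d r \<delta> c h (- sqrt (c / (r * h)))))"
proof -
  have "sqrt (r * d) \<ge> 0" using assms(1,2) by simp
  then have cpos: "c > 0" using assms(5) by linarith
  define p where "p = tw_profile d r \<delta> c"
  have Pp: "is_tw_profile d r \<delta> c p"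
  proof -
    obtain p0 where P0: "is_tw_profile d r \<delta> c p0" using tw_exists[OF assms] by blast
    have "\<exists>!p. is_tw_profile d r \<delta> c p"
      using P0 tw_unique[OF assms(1,2,4) cpos] by blast
    then show ?thesis unfolding p_def tw_profile_def by (rule theI')
  qed
  interpret P: prof d r \<delta> c p using Pp assms by (simp add: prof_def)
  define a where "a = 1 - \<delta>"
  have a: "a > 0" using assms unfolding a_def by simp
  have qdef: "tw_profile_h d r \<delta> c h = (\<lambda>\<xi>. p \<xi> + h * \<xi>)" for h
    unfolding tw_profile_h_def p_def by simp
  have dq: "deriv (\<lambda>\<xi>. p \<xi> + h * \<xi>) = (\<lambda>\<xi>. deriv p \<xi> + h)" for h
  proof
    fix x show "deriv (\<lambda>\<xi>. p \<xi> + h * \<xi>) x = deriv p x + h"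
      by (rule DERIV_imp_deriv) (auto intro!: derivative_eq_intros P.D1)
  qed
  have ddq: "deriv (\<lambda>\<xi>. deriv p \<xi> + h) x = deriv (deriv p) x" for h x
    by (rule DERIV_imp_deriv) (auto intro!: derivative_eq_intros P.D2)
  have part1: "- d * deriv (deriv (tw_profile_h d r \<delta> c h)) \<xi> - c * deriv (tw_profile_h d r \<delta> c h) \<xi>
            \<le> r * tw_profile_h d r \<delta> c h \<xi> * (1 - \<delta> - tw_profile_h d r \<delta> c h \<xi>)"
    if h: "h > 0" and xi: "\<xi> \<in> {- sqrt (c / (r * h)) .. sqrt (c / (r * h))}" for h \<xi>
  proof -
    have "\<xi>\<^sup>2 \<le> c / (r * h)"
    proof -
      have "\<bar>\<xi>\<bar> \<le> sqrt (c / (r * h))" using xi by auto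
      then have "\<bar>\<xi>\<bar>\<^sup>2 \<le> (sqrt (c / (r * h)))\<^sup>2" by (intro power_mono) auto
      then show ?thesis using cpos h assms(2) by simp
    qed
    then have "r * h * \<xi>\<^sup>2 \<le> c" using h assms(2) by (simp add: field_simps)
    moreover have "\<xi> * (a - 2 * p \<xi>) \<ge> 0"
    proof (cases "\<xi> \<ge> 0")
      case True
      have "p \<xi> \<le> a / 2" using P.p0 P.dec[of 0 \<xi>] True unfolding a_def by (cases "\<xi> = 0") auto
      then show ?thesis using True by simp
    next
      case False
      have "p \<xi> \<ge> a / 2" using P.p0 P.dec[of \<xi> 0] False unfolding a_def by auto
      then show ?thesis using False by (simp add: mult_nonpos_nonpos)
    qed
    moreover have "r * (\<xi> * (a - 2 * p \<xi>)) \<ge> 0" using calculation(2) assms(2) by simp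
    ultimately have "r * (\<xi> * (a - 2 * p \<xi>)) + c - r * h * \<xi>\<^sup>2 \<ge> 0" by linarith
    then have key: "h * (r * (\<xi> * (a - 2 * p \<xi>)) + c - r * h * \<xi>\<^sup>2) \<ge> 0"
      using h by simp
    have ode: "- d * deriv (deriv p) \<xi> - c * deriv p \<xi> = r * p \<xi> * (a - p \<xi>)"
      using P.ode unfolding a_def by simp
    have "r * (p \<xi> + h * \<xi>) * (a - (p \<xi> + h * \<xi>)) - (- d * deriv (deriv p) \<xi> - c * (deriv p \<xi> + h))
       = h * (r * (\<xi> * (a - 2 * p \<xi>)) + c - r * h * \<xi>\<^sup>2)"
      using ode by (simp add: algebra_simps power2_eq_square)
    then show ?thesis using key unfolding qdef dq ddq a_def by simp
  qed
  have part2: "\<exists>hs>0. \<forall>h\<in>{0<..hs}.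
          Sup (tw_profile_h d r \<delta> c h ` {- sqrt (c / (r * h)) .. 0}) \<ge> 1 - 2 * \<delta> \<and>
          Sup (tw_profile_h d r \<delta> c h ` {- sqrt (c / (r * h)) .. 0}) >
            max (tw_profile_h d r \<delta> c h 0)
                (tw_profile_h d r \<delta> c h (- sqrt (c / (r * h))))"
  proof -
    define e1 where "e1 = min \<delta> a / 4"
    have e1: "e1 > 0" unfolding e1_def using a assms by simp
    obtain T1 where T1: "\<And>t. t \<ge> T1 \<Longrightarrow> p (- t) > a - e1"
    proof -
      have "\<forall>\<^sub>F x in at_bot. p x > a - e1" using P.lbot e1 unfolding a_def by (intro order_tendstoD) auto
      then obtain X where "\<And>x. x \<le> X \<Longrightarrow> p x > a - e1" unfolding eventually_at_bot_linorder by auto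
      then show ?thesis using that[of "- X"] by force
    qed
    obtain T3 where T3: "T3 > 0" "\<And>t. t \<ge> T3 \<Longrightarrow> t * (a - p (- t)) < c / (4 * r)"
      using P.tail[OF cpos, of "c / (4 * r)"] cpos assms(2) unfolding a_def by auto
    define T0 where "T0 = max (max 1 T1) (max T3 (c / (r * e1)))"
    have T0: "T0 > 0" "T0 \<ge> T1" "T0 \<ge> T3" "T0 \<ge> c / (r * e1)" unfolding T0_def by auto
    define hs where "hs = c / (r * (2 * T0)\<^sup>2)"
    have hs: "hs > 0" unfolding hs_def using cpos assms(2) T0 by simp
    have "Sup (tw_profile_h d r \<delta> c h ` {- sqrt (c / (r * h)) .. 0}) \<ge> 1 - 2 * \<delta> \<and>
          Sup (tw_profile_h d r \<delta> c h ` {- sqrt (c / (r * h)) .. 0}) >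
            max (tw_profile_h d r \<delta> c h 0)
                (tw_profile_h d r \<delta> c h (- sqrt (c / (r * h))))" if h: "h \<in> {0<..hs}" for h
    proof -
      define L where "L = sqrt (c / (r * h))"
      have hpos: "h > 0" using h by simp
      have L2: "L\<^sup>2 = c / (r * h)" unfolding L_def using cpos assms(2) hpos by simp
      have Lpos: "L > 0" unfolding L_def using cpos assms(2) hpos by simp
      have "c / (r * h) \<ge> c / (r * hs)"
        using h hpos cpos assms(2) by (intro divide_left_mono mult_pos_pos) auto
      also have "c / (r * hs) = (2 * T0)\<^sup>2" unfolding hs_def using cpos assms(2) T0 by simp
      finally have "(2 * T0)\<^sup>2 \<le> L\<^sup>2" using L2 by simp
      then have "2 * T0 \<le> L" using power2_le_imp_le[OF _ less_imp_le[OF Lpos]] by blast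
      define t where "t = L / 2"
      have t: "t \<ge> T0" using \<open>2 * T0 \<le> L\<close> unfolding t_def by simp
      have tpos: "t > 0" using t T0 by simp
      have hL: "h * t = c / (4 * r * t)"
      proof -
        have "h * L\<^sup>2 = c / r" using L2 hpos by (simp add: field_simps)
        then show ?thesis unfolding t_def using Lpos assms(2) by (simp add: field_simps power2_eq_square)
      qed
      define q where "q = tw_profile_h d r \<delta> c h"
      have q: "q x = p x + h * x" for x unfolding q_def qdef by simp
      have small: "c / (4 * r * t) \<le> e1 / 4"
      proof -
        have "c / (r * e1) \<le> t" using t T0 by simp
        then have "c \<le> t * (r * e1)" using assms(2) e1 by (simp add: field_simps)
        then show ?thesis using tpos assms(2) by (simp add: field_simps)
      qed
      have v: "q (- t) = p (- t) - c / (4 * r * t)" using q hL by simp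
      have pt: "p (- t) > a - e1" using T1 t T0 by simp
      have e1d: "e1 \<le> \<delta> / 4" "e1 \<le> a / 4" unfolding e1_def by auto
      have q1: "q (- t) > a - \<delta>" using v pt small e1d e1 by linarith
      have q0: "q 0 = a / 2" using q[of 0] P.p0 unfolding a_def by simp
      have q2: "q (- t) > q 0" using v pt small e1d e1 q0 by linarith
      have q3: "q (- t) > q (- L)"
      proof -
        have "t * (a - p (- t)) < c / (4 * r)" using T3 t T0 by simp
        then have "a - p (- t) < (c / (4 * r)) / t" using tpos pos_less_divide_eq[OF tpos, of "a - p (- t)" "c / (4 * r)"] by (simp add: mult.commute)
        then have "a - p (- t) < c / (4 * r * t)" by (simp add: divide_divide_eq_left)
        moreover have "p (- L) < a" using P.lt1 unfolding a_def by simp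
        moreover have "h * L = 2 * (c / (4 * r * t))" using hL unfolding t_def by simp
        ultimately show ?thesis using v q[of "- L"] by simp
      qed
      have mem: "- t \<in> {- L .. 0}" unfolding t_def using Lpos by simp
      have cq: "continuous_on {- L .. 0} q"
        unfolding q_def qdef by (intro continuous_at_imp_continuous_on ballI continuous_intros P.cont)
      have bdd: "bdd_above (q ` {- L .. 0})"
        using compact_continuous_image[OF cq] by (simp add: bounded_imp_bdd_above compact_imp_bounded)
      have S: "Sup (q ` {- L .. 0}) \<ge> q (- t)" using bdd mem by (intro cSup_upper) auto
      have "1 - 2 * \<delta> \<le> Sup (q ` {- L .. 0})" using S q1 unfolding a_def by linarith
      moreover have "Sup (q ` {- L .. 0}) > max (q 0) (q (- L))" using S q2 q3 by simp
      ultimately show ?thesis unfolding q_def L_def by simp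
    qed
    then show ?thesis using hs by blast
  qed
  show ?thesis using part1 part2 by blast
qed

end
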